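(* In the setting of the context, fix $\beta>0$ and let $\Gamma_\beta:=\overline{W_{\overline{\mathbb{R}}\times\{\beta\}}(T)\setminus i\mathbb{R}}$. Then there is a unique maximal horizontal strip with respect to $\Gamma_\beta$ if and only if $d>\min(2\sqrt{\beta},d_2)$. If $d\le\min(2\sqrt{\beta},d_2)$ there is no such strip.
   Context: Let $c\ge0$, $d>0$, $\delta_\pm:=\pm\sqrt{c-d^2/4}-id/2$ (principal square root). For real $\alpha,\beta$ let $p_{(\alpha,\beta)}(\omega):=(\alpha-\omega^2)(c-id\omega-\omega^2)-\beta\omega^2$ with roots $r_1,\dots,r_4$ labelled continuously in $(\alpha,\beta)$ and extended by limits to $\alpha=\pm\infty$ (roots $\delta_\pm$ and $\infty$ twice), values in the Riemann sphere $\overline{\mathbb{C}}$. $W_{\overline{\mathbb{R}}\times\{\beta\}}(T):=\bigcup_{n=1}^4\{r_n(\alpha,\beta):\alpha\in\mathbb{R}\cup\{\pm\infty\}\}$, closures in $\overline{\mathbb{C}}$. Let $q_\beta(\mu):=\mu^4+2d\mu^3+(2c+d^2)\mu^2+d(\beta/2+2c)\mu+c(\beta+c)$ and $\Delta_{q_\beta}$ its discriminant as a function of $d$. Define $d_2$ by: $d_2=\infty$ if $\beta<4c$; if $\beta\ge4c>0$, $d_2$ is the (unique) solution of $\Delta_{q_\beta}=0$ in $(2\sqrt{c},2\sqrt{\beta}]$; if $c=0$, $d_2=\sqrt{27\beta/8}$. A horizontal strip is an open set $\mathcal{S}=\{\omega\in\overline{\mathbb{C}}:s_0<\omega_\Im<s_1\}$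 with real $s_0<s_1$; for a closed $\Gamma\subset\overline{\mathbb{C}}$ it is maximal with respect to $\Gamma$ if $\mathcal{S}\subset\overline{\mathbb{C}}\setminus\Gamma$, $\Gamma\cap(\mathbb{R}+is_0)\neq\emptyset$ and $\Gamma\cap(\mathbb{R}+is_1)\neq\emptyset$. *)

theory Defs
  imports "HOL-Analysis.Analysis"
begin

definition pab :: "real \<Rightarrow> real \<Rightarrow> real \<Rightarrow> real \<Rightarrow> complex \<Rightarrow> complex" where
  "pab c d \<alpha> \<beta> \<omega> =
     (of_real \<alpha> - \<omega>^2) * (of_real c - \<i> * of_real d * \<omega> - \<omega>^2) - of_real \<beta> * \<omega>^2"

definition delta_p :: "real \<Rightarrow> real \<Rightarrow> complex" where
  "delta_p c d = csqrt (of_real (c - d^2/4)) - \<i> * of_real (d/2)"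
definition delta_m :: "real \<Rightarrow> real \<Rightarrow> complex" where
  "delta_m c d = - csqrt (of_real (c - d^2/4)) - \<i> * of_real (d/2)"

text \<open>Finite part of W_{(R-bar) x {beta}}(T): union over all alpha in R of the four roots
  r_1..r_4 of p_(alpha,beta), together with the finite limit roots delta_+, delta_- at
  alpha = +-infinity (the remaining limits are the point infinity, not in C).\<close>
definition W_beta :: "real \<Rightarrow> real \<Rightarrow> real \<Rightarrow> complex set" where
  "W_beta c d \<beta> = {\<omega>. \<exists>\<alpha>::real. pab c d \<alpha> \<beta> \<omega> = 0} \<union> {delta_p c d, delta_m c d}"

text \<open>Finite part of Gamma_beta = closure of (W \ iR). Closure in the Riemann sphere
  intersected with C equals the closure in C of the finite part.\<close>
definition Gamma_beta :: "real \<Rightarrow> real \<Rightarrow> real \<Rightarrow> complex set" where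
  "Gamma_beta c d \<beta> = closure {\<omega> \<in> W_beta c d \<beta>. Re \<omega> \<noteq> 0}"

definition disc4 :: "real \<Rightarrow> real \<Rightarrow> real \<Rightarrow> real \<Rightarrow> real \<Rightarrow> real" where
  "disc4 a b c d e =
     256*a^3*e^3 - 192*a^2*b*d*e^2 - 128*a^2*c^2*e^2 + 144*a^2*c*d^2*e - 27*a^2*d^4
   + 144*a*b^2*c*e^2 - 6*a*b^2*d^2*e - 80*a*b*c^2*d*e + 18*a*b*c*d^3 + 16*a*c^4*e
   - 4*a*c^3*d^2 - 27*b^4*e^2 + 18*b^3*c*d*e - 4*b^3*d^3 - 4*b^2*c^3*e + b^2*c^2*d^2"

definition disc_q :: "real \<Rightarrow> real \<Rightarrow> real \<Rightarrow> real" where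
  "disc_q c \<beta> d = disc4 1 (2*d) (2*c + d^2) (d*(\<beta>/2 + 2*c)) (c*(\<beta> + c))"

definition d2 :: "real \<Rightarrow> real \<Rightarrow> ereal" where
  "d2 c \<beta> =
    (if c = 0 then ereal (sqrt (27*\<beta>/8))
     else if \<beta> < 4*c then \<infinity>
     else ereal (THE x. 2 * sqrt c < (x::real) \<and> x \<le> 2 * sqrt \<beta> \<and> disc_q c \<beta> x = 0))"

definition maximal_strip :: "complex set \<Rightarrow> real \<Rightarrow> real \<Rightarrow> bool" where
  "maximal_strip \<Gamma> s0 s1 \<longleftrightarrow> s0 < s1 \<and>
     {\<omega>. s0 < Im \<omega> \<and> Im \<omega> < s1} \<inter> \<Gamma> = {} \<and>
     (\<exists>\<omega>\<in>\<Gamma>. Im \<omega> = s0) \<and> (\<exists>\<omega>\<in>\<Gamma>. Im \<omega> = s1)"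

end

theory Submission imports Defs begin

lemma quad_root_ge:
  fixes a b c x0 :: real
  assumes a: "a > 0" and f: "a*x0^2 + b*x0 + c \<le> 0"
  shows "\<exists>x\<ge>x0. a*x^2 + b*x + c = 0"
proof -
  define D where "D = b^2 - 4*a*c"
  have "4*a*(a*x0^2 + b*x0 + c) = (2*a*x0+b)^2 - D" unfolding D_def by algebra
  moreover have "4*a*(a*x0^2 + b*x0 + c) \<le> 0" using a f by (simp add: mult_nonneg_nonpos)
  ultimately have D: "(2*a*x0+b)^2 \<le> D" by linarith
  hence D0: "D \<ge> 0" by (smt (verit) zero_le_power2)
  have "\<bar>2*a*x0+b\<bar> \<le> sqrt D" using D real_sqrt_le_mono real_sqrt_abs by metis
  hence s: "2*a*x0+b \<le> sqrt D" by linarith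
  define x where "x = (-b + sqrt D)/(2*a)"
  have "x0 \<le> x" unfolding x_def using a s by (simp add: field_simps)
  moreover have "a*x^2 + b*x + c = 0"
  proof -
    have sq: "(sqrt D)^2 = D" using D0 by simp
    have "4*a*(a*x^2 + b*x + c) = (2*a*x+b)^2 - D" unfolding D_def by algebra
    also have "2*a*x + b = sqrt D" unfolding x_def using a by (simp add: field_simps)
    finally have "4*a*(a*x^2 + b*x + c) = 0" using sq by simp
    thus ?thesis using a by simp
  qed
  ultimately show ?thesis by blast
qed

definition kk :: "real \<Rightarrow> real \<Rightarrow> real \<Rightarrow> real" where "kk c h t = t^2 - 2*h*t + c"
definition qq :: "real \<Rightarrow> real \<Rightarrow> real \<Rightarrow> real \<Rightarrow> real" where
  "qq c h b t = (kk c h t)^2 - b*(h*t - c)"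
definition PP :: "real \<Rightarrow> real \<Rightarrow> real" where "PP h t = 4*t*(h-t)"
definition phi :: "real \<Rightarrow> real \<Rightarrow> real \<Rightarrow> real" where "phi c h t = (kk c h t)^2 / (h*t - c)"
definition rho :: "real \<Rightarrow> real \<Rightarrow> real \<Rightarrow> real" where
  "rho c h t = 3*h*t^2 - (4*c + 2*h^2)*t + 3*h*c"
definition iota :: "real \<Rightarrow> real \<Rightarrow> real \<Rightarrow> real" where "iota c h t = h*t^2 - 2*c*t + c*h"
definition curveF :: "real \<Rightarrow> real \<Rightarrow> real \<Rightarrow> real \<Rightarrow> real \<Rightarrow> real" where
  "curveF c h b s t = t*((kk c h t - s)^2 + 4* s*(t-h)^2) + b*c*t - b*h*(s + t^2)"
definition inY :: "real \<Rightarrow> real \<Rightarrow> real \<Rightarrow> real \<Rightarrow> bool" where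
  "inY c h b t \<longleftrightarrow> t > 0 \<and> (\<exists>s>0. curveF c h b s t = 0)"

lemma id1: "h^2 * curveF c h b s t = t*((h* s + t*(h*t-c)) - c*(h-t))^2 - h^2*(h* s + t*(h*t-c))*(b - 4*t*(h-t))"
  unfolding curveF_def kk_def by algebra
lemma id2: "h^2 * curveF c h b s t = t*((h* s + t*(h*t-c)) + c*(h-t))^2 - (h* s + t*(h*t-c))*(b*h^2 - 4*(h^2-c)*(t*(h-t)))"
  unfolding curveF_def kk_def by algebra
lemma id3: "curveF c h b s t = t* s^2 + (2*t*(t^2 - 2*h*t + 2*h^2 - c) - b*h)* s + t*qq c h b t"
  unfolding curveF_def kk_def qq_def by algebra
lemma id4: "(kk c h t)^2 - 4*t*(h-t)*(h*t-c) = (t^2-c)^2"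
  unfolding kk_def by algebra
lemma id5: "h^2*(kk c h t)^2 - 4*t*(t-h)*(c-h^2)*(h*t-c) = (iota c h t)^2"
  unfolding kk_def iota_def by algebra
lemma id6: "h*t - c \<noteq> 0 \<Longrightarrow> qq c h b t = (h*t-c)*(phi c h t - b)"
  unfolding qq_def phi_def by (simp add: field_simps)

lemma pos_mult_nonneg: "a > 0 \<Longrightarrow> a*b \<ge> 0 \<Longrightarrow> b \<ge> (0::real)"
  by (simp add: zero_le_mult_iff)

lemma F_sigma: "curveF c h b s t = t*((kk c h t - s)^2 + 4* s*(t-h)^2) - b*(h* s + t*(h*t-c))"
  unfolding curveF_def by algebra

locale cfg = fixes c h b :: real
  assumes c0: "c \<ge> 0" and h0: "h > 0" and b0: "b > 0"
begin

lemma Y1: assumes t: "t > 0" and q: "qq c h b t < 0" shows "inY c h b t"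
proof -
  have "t*0^2 + (2*t*(t^2 - 2*h*t + 2*h^2 - c) - b*h)*0 + t*qq c h b t \<le> 0"
    using mult_pos_neg[OF t q] by simp
  then obtain x where x: "x \<ge> 0" "t*x^2 + (2*t*(t^2 - 2*h*t + 2*h^2 - c) - b*h)*x + t*qq c h b t = 0"
    using quad_root_ge[OF t] by blast
  have "x \<noteq> 0" using x(2) t q by auto
  hence "x > 0" using x(1) by simp
  moreover have "curveF c h b x t = 0" using x(2) id3 by simp
  ultimately show ?thesis unfolding inY_def using t by blast
qed

lemma Y2: assumes t: "t > 0" "t \<le> h" "t^2 < c" and P: "PP h t \<le> b" shows "inY c h b t"
proof -
  define w where "w = h - t"
  define B where "B = 2*t*c*w + h^2*(b - 4*t*(h-t))"
  have w0: "w \<ge> 0" using t unfolding w_def by simp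
  have "t*(c*w)^2 + (-B)*(c*w) + t*c^2*w^2 = -(h^2*(b - 4*t*(h-t))*(c*w))"
    unfolding B_def by algebra
  also have "\<dots> \<le> 0" using P w0 c0 unfolding PP_def by (simp add: mult_nonneg_nonneg)
  finally obtain x where x: "x \<ge> c*w" "t*x^2 + (-B)*x + t*c^2*w^2 = 0"
    using quad_root_ge[OF t(1)] by blast
  define s where "s = (x - t*(h*t-c))/h"
  have hs: "h* s + t*(h*t-c) = x" unfolding s_def using h0 by simp
  have "c*w - t*(h*t-c) = h*(c - t^2)" unfolding w_def by algebra
  hence "c*w - t*(h*t-c) > 0" using h0 t by simp
  hence "s > 0" unfolding s_def using x(1) h0 by simp
  moreover have "h^2 * curveF c h b s t = 0"
    unfolding id1 hs using x(2) unfolding B_def w_def by algebra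
  hence "curveF c h b s t = 0" using h0 by simp
  ultimately show ?thesis unfolding inY_def using t by blast
qed

lemma Y3: assumes t: "t > h" and io: "iota c h t < 0" and M: "4*(h^2-c)*(t*(h-t)) \<le> b*h^2"
  shows "inY c h b t"
proof -
  have t0: "t > 0" using t h0 by simp
  define w where "w = h - t"
  define M where "M = b*h^2 - 4*(h^2-c)*(t*(h-t))"
  have w0: "w < 0" using t unfolding w_def by simp
  have "t*(-(c*w))^2 + (2*t*c*w - M)*(-(c*w)) + t*c^2*w^2 = M*(c*w)"
    by algebra
  also have "\<dots> \<le> 0" using M w0 c0 unfolding M_def by (simp add: mult_nonneg_nonpos)
  finally obtain x where x: "x \<ge> -(c*w)" "t*x^2 + (2*t*c*w - M)*x + t*c^2*w^2 = 0"
    using quad_root_ge[OF t0] by blast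
  define s where "s = (x - t*(h*t-c))/h"
  have hs: "h* s + t*(h*t-c) = x" unfolding s_def using h0 by simp
  have "-(c*w) - t*(h*t-c) = - iota c h t" unfolding w_def iota_def by algebra
  hence "-(c*w) - t*(h*t-c) > 0" using io by simp
  hence "s > 0" unfolding s_def using x(1) h0 by simp
  moreover have "h^2 * curveF c h b s t = 0"
    unfolding id2 hs using x(2) unfolding M_def w_def by algebra
  hence "curveF c h b s t = 0" using h0 by simp
  ultimately show ?thesis unfolding inY_def using t0 by blast
qed

lemma sigma_facts: assumes "inY c h b t"
  obtains s where "s > 0" "t > 0" "curveF c h b s t = 0" "h* s + t*(h*t-c) \<ge> 0"
    "c = 0 \<Longrightarrow> h* s + t*(h*t-c) > 0"
proof -
  obtain s where s: "s > 0" "t > 0" "curveF c h b s t = 0" using assms unfolding inY_def by blast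
  have N: "t*((kk c h t - s)^2 + 4* s*(t-h)^2) \<ge> 0" using s(1,2) by simp
  have "b*(h* s + t*(h*t-c)) = t*((kk c h t - s)^2 + 4* s*(t-h)^2)" using s(3) F_sigma by simp
  hence "b*(h* s + t*(h*t-c)) \<ge> 0" using N by simp
  hence "h* s + t*(h*t-c) \<ge> 0" using b0 by (simp add: zero_le_mult_iff)
  moreover have "c = 0 \<Longrightarrow> h* s + t*(h*t-c) > 0"
  proof -
    assume "c = 0"
    moreover have "h* s > 0" "t*(h*t) > 0" using h0 s by simp_all
    ultimately show ?thesis by simp
  qed
  ultimately show ?thesis using that s by blast
qed

lemma Y4: assumes Y: "inY c h b t" and th: "t \<le> h" shows "PP h t \<le> b"
proof -
  obtain s where s: "s > 0" "t > 0" "curveF c h b s t = 0" "h* s + t*(h*t-c) \<ge> 0"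
    "c = 0 \<Longrightarrow> h* s + t*(h*t-c) > 0" using sigma_facts[OF Y] by blast
  define x where "x = h* s + t*(h*t-c)"
  have e: "t*(x - c*(h-t))^2 = h^2*x*(b - 4*t*(h-t))" using id1[of h c b s t] s(3) unfolding x_def by simp
  show ?thesis
  proof (cases "x > 0")
    case True
    have "h^2*x*(b - 4*t*(h-t)) \<ge> 0" using e[symmetric] s(2) by simp
    moreover have "h^2*x > 0" using True h0 by simp
    ultimately have "b - 4*t*(h-t) \<ge> 0" using pos_mult_nonneg by blast
    thus ?thesis unfolding PP_def by simp
  next
    case False
    hence x0: "x = 0" using s(4) unfolding x_def by simp
    hence "t*(c*(h-t))^2 = 0" using e by simp
    hence "c = 0 \<or> h = t" using s(2) by simp
    moreover have "c \<noteq> 0" using s(5) x0 unfolding x_def by auto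
    ultimately show ?thesis unfolding PP_def using b0 by simp
  qed
qed

lemma Y5: assumes Y: "inY c h b t" shows "4*(h^2-c)*(t*(h-t)) \<le> b*h^2"
proof -
  obtain s where s: "s > 0" "t > 0" "curveF c h b s t = 0" "h* s + t*(h*t-c) \<ge> 0"
    "c = 0 \<Longrightarrow> h* s + t*(h*t-c) > 0" using sigma_facts[OF Y] by blast
  define x where "x = h* s + t*(h*t-c)"
  have e: "t*(x + c*(h-t))^2 = x*(b*h^2 - 4*(h^2-c)*(t*(h-t)))" using id2[of h c b s t] s(3) unfolding x_def by simp
  show ?thesis
  proof (cases "x > 0")
    case True
    have "x*(b*h^2 - 4*(h^2-c)*(t*(h-t))) \<ge> 0" using e[symmetric] s(2) by simp
    hence "b*h^2 - 4*(h^2-c)*(t*(h-t)) \<ge> 0" using True by (simp add: zero_le_mult_iff)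
    thus ?thesis by simp
  next
    case False
    hence x0: "x = 0" using s(4) unfolding x_def by simp
    hence "t*(c*(h-t))^2 = 0" using e by simp
    hence "c = 0 \<or> h = t" using s(2) by simp
    moreover have "c \<noteq> 0" using s(5) x0 unfolding x_def by auto
    ultimately show ?thesis using b0 by simp
  qed
qed

lemma Y6: assumes Y: "inY c h b t" and tc: "t^2 \<ge> c" and io: "iota c h t \<ge> 0"
  shows "qq c h b t \<le> 0"
proof -
  obtain s where s: "s > 0" "t > 0" "curveF c h b s t = 0" using Y unfolding inY_def by blast
  define x where "x = h* s + t*(h*t-c)"
  define tau where "tau = t*(h*t-c)"
  define w where "w = h - t"
  define B where "B = 2*t*c*w + h^2*(b - 4*t*(h-t))"
  have G: "\<And>y. h^2 * curveF c h b ((y - tau)/h) t = t*y^2 - B*y + t*c^2*w^2"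
  proof -
    fix y
    have "h*((y - tau)/h) + t*(h*t-c) = y" unfolding tau_def using h0 by simp
    thus "h^2 * curveF c h b ((y - tau)/h) t = t*y^2 - B*y + t*c^2*w^2"
      using id1[of h c b "(y - tau)/h" t] unfolding B_def w_def by (simp add: algebra_simps power2_eq_square)
  qed
  have sx: "s = (x - tau)/h" unfolding x_def tau_def using h0 by simp
  have Gx: "t*x^2 - B*x + t*c^2*w^2 = 0" using G[of x] s(3) sx by simp
  have Gt: "t*tau^2 - B*tau + t*c^2*w^2 = h^2 * t * qq c h b t"
    using G[of tau] id3[of c h b 0 t] by simp
  have fac: "x*(t*tau^2 - B*tau + t*c^2*w^2) = t*(tau - x)*(x*tau - c^2*w^2)"
  proof -
    have "x*(t*tau^2 - B*tau + t*c^2*w^2) - t*(tau - x)*(x*tau - c^2*w^2) = tau*(t*x^2 - B*x + t*c^2*w^2)"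
      by algebra
    thus ?thesis using Gx by simp
  qed
  have t1: "tau - c*w = h*(t^2-c)" unfolding tau_def w_def by algebra
  have t2: "tau + c*w = iota c h t" unfolding tau_def w_def iota_def by algebra
  have a1: "tau - c*w \<ge> 0" using t1 tc h0 by simp
  have a2: "tau + c*w \<ge> 0" using t2 io by simp
  have tau0: "tau \<ge> 0" using a1 a2 by simp
  have xt: "x > tau" unfolding x_def tau_def using s(1) h0 by simp
  have "x*tau - c^2*w^2 \<ge> tau*tau - c^2*w^2" using xt tau0 by (simp add: mult_right_mono)
  also have "tau*tau - c^2*w^2 = (tau - c*w)*(tau+c*w)" by algebra
  finally have p: "x*tau - c^2*w^2 \<ge> 0" using mult_nonneg_nonneg[OF a1 a2] by linarith
  have "t*(tau - x)*(x*tau - c^2*w^2) \<le> 0"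
    using s(2) xt p by (simp add: mult_nonpos_nonneg mult_nonneg_nonpos)
  moreover have "x*(h^2 * t * qq c h b t) = t*(tau - x)*(x*tau - c^2*w^2)" using fac unfolding Gt .
  ultimately have "x*(h^2 * t * qq c h b t) \<le> 0" by linarith
  moreover have "x > 0" using xt tau0 by simp
  ultimately have "h^2 * t * qq c h b t \<le> 0" by (simp add: mult_le_0_iff)
  thus ?thesis using h0 s(2) by (simp add: mult_le_0_iff)
qed

end

lemma phi_deriv: assumes "h*x - c \<noteq> 0"
  shows "(phi c h has_real_derivative (kk c h x * rho c h x / (h*x - c)^2)) (at x)"
proof -
  have e: "phi c h = (\<lambda>x. (x^2 - 2*h*x + c)^2 / (h*x - c))" unfolding phi_def kk_def by auto
  have "((\<lambda>x. (x^2 - 2*h*x + c)^2 / (h*x - c)) has_real_derivative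
     ((2*(x^2 - 2*h*x+c)*(2*x - 2*h))*(h*x - c) - (x^2-2*h*x+c)^2*h)/((h*x-c)*(h*x-c))) (at x)"
    using assms by (auto intro!: derivative_eq_intros simp: algebra_simps power2_eq_square)
  moreover have "((2*(x^2 - 2*h*x+c)*(2*x - 2*h))*(h*x - c) - (x^2-2*h*x+c)^2*h)/((h*x-c)*(h*x-c))
     = kk c h x * rho c h x / (h*x - c)^2"
    unfolding kk_def rho_def power2_eq_square by (simp add: algebra_simps)
  ultimately show ?thesis unfolding e by simp
qed

lemma phi_cont: assumes "\<forall>x\<in>{a..b}. h*x - c > 0" shows "continuous_on {a..b} (phi c h)"
  unfolding phi_def kk_def using assms by (auto intro!: continuous_intros)

lemma phi_inc: assumes "a < b" "h*a - c > 0" "h > 0"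
  and "\<And>x. a < x \<Longrightarrow> x < b \<Longrightarrow> kk c h x * rho c h x > 0"
  shows "phi c h a < phi c h b"
proof (rule DERIV_pos_imp_increasing_open[OF assms(1)])
  have p: "\<And>x. x \<ge> a \<Longrightarrow> h*x - c > 0"
  proof -
    fix x assume "x \<ge> a" hence "h*x \<ge> h*a" using assms(3) by simp
    thus "h*x - c > 0" using assms(2) by simp
  qed
  show "continuous_on {a..b} (phi c h)" using phi_cont p by auto
  fix x assume x: "a < x" "x < b"
  have "h*x - c > 0" using p x by simp
  moreover have "kk c h x * rho c h x / (h*x - c)^2 > 0" using assms(4)[OF x] calculation by simp
  ultimately show "\<exists>y. (phi c h has_real_derivative y) (at x) \<and> y > 0" using phi_deriv by force
qed

lemma phi_dec: assumes "a < b" "h*a - c > 0" "h > 0"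
  and "\<And>x. a < x \<Longrightarrow> x < b \<Longrightarrow> kk c h x * rho c h x < 0"
  shows "phi c h a > phi c h b"
proof (rule DERIV_neg_imp_decreasing_open[OF assms(1)])
  have p: "\<And>x. x \<ge> a \<Longrightarrow> h*x - c > 0"
  proof -
    fix x assume "x \<ge> a" hence "h*x \<ge> h*a" using assms(3) by simp
    thus "h*x - c > 0" using assms(2) by simp
  qed
  show "continuous_on {a..b} (phi c h)" using phi_cont p by auto
  fix x assume x: "a < x" "x < b"
  have "h*x - c > 0" using p x by simp
  moreover have "kk c h x * rho c h x / (h*x - c)^2 < 0" using assms(4)[OF x] calculation
    by (simp add: divide_neg_pos)
  ultimately show "\<exists>y. (phi c h has_real_derivative y) (at x) \<and> y < 0" using phi_deriv by force
qed

lemma mid_lt1: "x < (y::real) \<Longrightarrow> x < (x+y)/2" by (simp add: field_simps)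
lemma mid_lt2: "x < (y::real) \<Longrightarrow> (x+y)/2 < y" by (simp add: field_simps)
lemmas mid_lt = mid_lt1 mid_lt2

lemma closure_nonneg: assumes "\<forall>t\<in>Y. t > (0::real)" "t \<in> closure Y" shows "t \<ge> 0"
proof -
  have "Y \<subseteq> {0..}" using assms(1) by auto
  hence "closure Y \<subseteq> {0..}" by (simp add: closure_minimal)
  thus ?thesis using assms(2) by auto
qed

lemma closure_pt: assumes "t \<in> closure Y" "e > 0" obtains y where "y \<in> Y" "\<bar>y - t\<bar> < (e::real)"
  using assms closure_approachable[of t Y] by (auto simp: dist_real_def)

lemma open_gap_closure: assumes "\<forall>t\<in>Y. t \<le> a \<or> t \<ge> b" "t \<in> closure Y" "a < t" "t < (b::real)"
  shows False
proof -
  have "{a<..<b} \<inter> Y = {}" using assms(1) by auto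
  hence "{a<..<b} \<inter> closure Y = {}" using open_Int_closure_eq_empty[of "{a<..<b}" Y] by auto
  thus False using assms by auto
qed

definition GapY :: "real set \<Rightarrow> real \<Rightarrow> real \<Rightarrow> bool" where
  "GapY Y a b \<longleftrightarrow> 0 < a \<and> a < b \<and> a \<in> closure Y \<and> b \<in> closure Y \<and> (\<forall>t\<in>Y. t \<le> a \<or> t \<ge> b)
     \<and> (\<forall>t\<in>Y. t < b \<longrightarrow> (\<forall>t'. 0<t' \<and> t'<t \<longrightarrow> t' \<in> closure Y))
     \<and> (\<forall>t\<in>Y. t > a \<longrightarrow> (\<forall>t'. b<t' \<and> t'<t \<longrightarrow> t' \<in> closure Y))"

definition NoGapY :: "real set \<Rightarrow> bool" where
  "NoGapY Y \<longleftrightarrow> (\<forall>t\<in>Y. \<forall>t'. 0<t' \<and> t'<t \<longrightarrow> t' \<in> closure Y)"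

lemma nogap_strip:
  fixes G :: "complex set" and Y :: "real set"
  assumes F1: "\<forall>w\<in>G. - Im w \<in> closure Y" and F2: "\<forall>t\<in>closure Y. t > 0 \<longrightarrow> (\<exists>w\<in>G. Im w = -t)"
    and F3: "\<forall>t\<in>Y. t > 0" and NG: "NoGapY Y"
  shows "\<not> (\<exists>s0 s1. maximal_strip G s0 s1)"
proof
  assume "\<exists>s0 s1. maximal_strip G s0 s1"
  then obtain s0 s1 where m: "maximal_strip G s0 s1" by blast
  hence lt: "s0 < s1" and dis: "{w. s0 < Im w \<and> Im w < s1} \<inter> G = {}"
    and e0: "\<exists>w\<in>G. Im w = s0" and e1: "\<exists>w\<in>G. Im w = s1"
    unfolding maximal_strip_def by auto
  have t0: "-s0 \<in> closure Y" using e0 F1 by auto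
  have t1: "-s1 \<in> closure Y" using e1 F1 by auto
  have t1p: "-s1 \<ge> 0" using closure_nonneg[OF F3 t1] .
  obtain y where y: "y \<in> Y" "\<bar>y - (-s0)\<bar> < (s1 - s0)/2" using closure_pt[OF t0, of "(s1-s0)/2"] lt by auto
  define t' where "t' = (-s1 + min y (-s0))/2"
  have "y > -s0 - (s1-s0)/2" using y(2) unfolding abs_less_iff by linarith
  hence "y > -s1" using lt by (simp add: field_simps)
  hence a: "-s1 < t'" "t' < min y (-s0)" unfolding t'_def using lt by auto
  hence "t' > 0" using t1p by linarith
  hence "t' \<in> closure Y" using NG y(1) a unfolding NoGapY_def by auto
  then obtain w where "w \<in> G" "Im w = -t'" using F2 \<open>t' > 0\<close> by blast
  moreover have "s0 < -t'" "-t' < s1" using a by auto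
  ultimately have "w \<in> {w. s0 < Im w \<and> Im w < s1} \<inter> G" by simp
  thus False using dis by blast
qed

lemma gap_strip:
  fixes G :: "complex set" and Y :: "real set"
  assumes F1: "\<forall>w\<in>G. - Im w \<in> closure Y" and F2: "\<forall>t\<in>closure Y. t > 0 \<longrightarrow> (\<exists>w\<in>G. Im w = -t)"
    and F3: "\<forall>t\<in>Y. t > 0" and Gp: "GapY Y a b"
  shows "\<exists>!s. maximal_strip G (fst s) (snd s)"
proof -
  have a0: "0 < a" and ab: "a < b" and aY: "a \<in> closure Y" and bY: "b \<in> closure Y"
    and sep: "\<forall>t\<in>Y. t \<le> a \<or> t \<ge> b"
    and lf: "\<forall>t\<in>Y. t < b \<longrightarrow> (\<forall>t'. 0<t' \<and> t'<t \<longrightarrow> t' \<in> closure Y)"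
    and rt: "\<forall>t\<in>Y. t > a \<longrightarrow> (\<forall>t'. b<t' \<and> t'<t \<longrightarrow> t' \<in> closure Y)"
    using Gp unfolding GapY_def by auto
  have ex: "maximal_strip G (-b) (-a)"
    unfolding maximal_strip_def
  proof (intro conjI)
    show "-b < -a" using ab by simp
    show "{w. - b < Im w \<and> Im w < - a} \<inter> G = {}"
    proof (rule ccontr)
      assume "{w. - b < Im w \<and> Im w < - a} \<inter> G \<noteq> {}"
      then obtain w where w: "w \<in> G" "-b < Im w" "Im w < -a" by auto
      have "-Im w \<in> closure Y" using F1 w by auto
      thus False using open_gap_closure[OF sep \<open>-Im w \<in> closure Y\<close>] w by auto
    qed
    show "\<exists>w\<in>G. Im w = - b" using F2 bY a0 ab by auto
    show "\<exists>w\<in>G. Im w = - a" using F2 aY a0 by auto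
  qed
  have un: "s0 = -b \<and> s1 = -a" if m: "maximal_strip G s0 s1" for s0 s1
  proof -
    have lt: "s0 < s1" and dis: "{w. s0 < Im w \<and> Im w < s1} \<inter> G = {}"
      and e0: "\<exists>w\<in>G. Im w = s0" and e1: "\<exists>w\<in>G. Im w = s1"
      using m unfolding maximal_strip_def by auto
    define t0 where "t0 = -s0"
    define t1 where "t1 = -s1"
    have t0Y: "t0 \<in> closure Y" using e0 F1 unfolding t0_def by auto
    have t1Y: "t1 \<in> closure Y" using e1 F1 unfolding t1_def by auto
    have t1p: "t1 \<ge> 0" using closure_nonneg[OF F3 t1Y] .
    have tt: "t1 < t0" unfolding t0_def t1_def using lt by simp
    have K: "\<And>t. t1 < t \<Longrightarrow> t < t0 \<Longrightarrow> t > 0 \<Longrightarrow> t \<notin> closure Y"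
    proof
      fix t assume t: "t1 < t" "t < t0" "t > 0" "t \<in> closure Y"
      then obtain w where "w \<in> G" "Im w = -t" using F2 by blast
      moreover have "s0 < -t" "-t < s1" using t unfolding t0_def t1_def by auto
      ultimately have "w \<in> {w. s0 < Im w \<and> Im w < s1} \<inter> G" by simp
      thus False using dis by blast
    qed
    have "t0 \<le> b"
    proof (rule ccontr)
      assume nb: "\<not> t0 \<le> b"
      define d where "d = min (t0 - b) (t0 - t1) / 2"
      have d0: "d > 0" unfolding d_def using nb tt by simp
      obtain y where y: "y \<in> Y" "\<bar>y - t0\<bar> < d" using closure_pt[OF t0Y d0] by blast
      have "y > t0 - d" using y(2) unfolding abs_less_iff by linarith
      moreover have "2*d \<le> t0 - b" "2*d \<le> t0 - t1" unfolding d_def by auto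
      ultimately have yb: "y > max b t1" using d0 by simp
      define t' where "t' = (max b t1 + min y t0)/2"
      have "max b t1 < min y t0" using yb nb tt by simp
      hence t'a: "max b t1 < t'" and t'b: "t' < min y t0" unfolding t'_def using mid_lt by blast+
      note t' = t'a t'b
      have "y > a" using yb ab by simp
      hence "t' \<in> closure Y" using rt y(1) t' by auto
      moreover have "t' > 0" using t' a0 ab by simp
      ultimately show False using K t' by auto
    qed
    moreover have "t1 \<ge> a"
    proof (rule ccontr)
      assume na: "\<not> t1 \<ge> a"
      define d where "d = min (b - a) (a - t1) / 2"
      have d0: "d > 0" unfolding d_def using na ab by simp
      obtain y where y: "y \<in> Y" "\<bar>y - a\<bar> < d" using closure_pt[OF aY d0] by blast
      have "y > a - d" using y(2) unfolding abs_less_iff by linarith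
      moreover have "y < a + d" using y(2) unfolding abs_less_iff by linarith
      moreover have "2*d \<le> b - a" "2*d \<le> a - t1" unfolding d_def by auto
      ultimately have yb1: "y < b" using d0 by linarith
      have yb2: "y > t1" using \<open>y > a - d\<close> \<open>2*d \<le> a - t1\<close> d0 by linarith
      note yb = yb1 yb2
      define t' where "t' = (t1 + min y t0)/2"
      have "t1 < min y t0" using yb tt by simp
      hence t'a: "t1 < t'" and t'b: "t' < min y t0" unfolding t'_def using mid_lt by blast+
      note t' = t'a t'b
      have tp: "t' > 0" using t' t1p by simp
      hence "t' \<in> closure Y" using lf y(1) yb t' by auto
      thus False using K t' tp by auto
    qed
    ultimately have "t1 = a" "t0 = b"
    proof -
      assume h1: "t0 \<le> b" and h2: "t1 \<ge> a"
      show "t1 = a"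
      proof (rule ccontr)
        assume "t1 \<noteq> a" hence "a < t1" using h2 by simp
        thus False using open_gap_closure[OF sep t1Y] tt h1 by simp
      qed
      show "t0 = b"
      proof (rule ccontr)
        assume "t0 \<noteq> b" hence "t0 < b" using h1 by simp
        thus False using open_gap_closure[OF sep t0Y] tt h2 by simp
      qed
    qed
    thus ?thesis unfolding t0_def t1_def by auto
  qed
  show ?thesis
  proof (rule ex1I[of _ "(-b, -a)"])
    show "maximal_strip G (fst (- b, - a)) (snd (- b, - a))" using ex by simp
    fix s assume "maximal_strip G (fst s) (snd s)"
    hence "fst s = -b \<and> snd s = -a" using un by blast
    thus "s = (-b, -a)" by (simp add: prod_eq_iff)
  qed
qed

lemma gap_from_g:
  fixes Y :: "real set"
  assumes Ypos: "\<forall>t\<in>Y. t > 0"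
  and e: "e > 0" "\<forall>t\<in>Y. \<bar>t - g\<bar> \<ge> e"
  and L: "\<exists>t\<in>Y. t < g" and R: "\<exists>t\<in>Y. t > g"
  and left: "\<forall>t\<in>Y. t < g \<longrightarrow> (\<forall>t'. 0 < t' \<and> t' < t \<longrightarrow> t' \<in> closure Y)"
  and right: "\<forall>t1\<in>Y. \<forall>t2\<in>Y. g < t1 \<longrightarrow> t1 < t2 \<longrightarrow> (\<forall>t'. t1 < t' \<and> t' < t2 \<longrightarrow> t' \<in> closure Y)"
  shows "\<exists>a b. GapY Y a b"
proof -
  define YL where "YL = {t\<in>Y. t < g}"
  define YR where "YR = {t\<in>Y. t > g}"
  define a where "a = Sup YL"
  define b where "b = Inf YR"
  have neq: "\<And>t. t \<in> Y \<Longrightarrow> t \<noteq> g"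
  proof
    fix t assume "t \<in> Y" "t = g"
    hence "\<bar>t - g\<bar> \<ge> e" using e(2) by blast
    thus False using \<open>t = g\<close> e(1) by simp
  qed
  have YLne: "YL \<noteq> {}" using L unfolding YL_def by auto
  have YRne: "YR \<noteq> {}" using R unfolding YR_def by auto
  have YLb: "bdd_above YL" unfolding YL_def by (rule bdd_aboveI[of _ g]) auto
  have YRb: "bdd_below YR" unfolding YR_def by (rule bdd_belowI[of _ g]) auto
  have aub: "\<And>t. t \<in> YL \<Longrightarrow> t \<le> a" unfolding a_def using YLb cSup_upper by blast
  have blb: "\<And>t. t \<in> YR \<Longrightarrow> b \<le> t" unfolding b_def using YRb cInf_lower by blast
  have ale: "a \<le> g - e"
    unfolding a_def
  proof (rule cSup_least[OF YLne])
    fix t assume t: "t \<in> YL"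
    hence "\<bar>t - g\<bar> \<ge> e" "t < g" using e(2) unfolding YL_def by auto
    moreover have "\<bar>t - g\<bar> = g - t" using \<open>t < g\<close> by simp
    ultimately show "t \<le> g - e" by linarith
  qed
  have bge: "b \<ge> g + e"
    unfolding b_def
  proof (rule cInf_greatest[OF YRne])
    fix t assume t: "t \<in> YR"
    hence "\<bar>t - g\<bar> \<ge> e" "t > g" using e(2) unfolding YR_def by auto
    moreover have "\<bar>t - g\<bar> = t - g" using \<open>t > g\<close> by simp
    ultimately show "g + e \<le> t" by linarith
  qed
  have aY: "a \<in> closure Y"
  proof -
    have "a \<in> closure YL" unfolding a_def using closure_contains_Sup[OF YLne YLb] .
    moreover have "closure YL \<subseteq> closure Y" unfolding YL_def by (rule closure_mono) auto
    ultimately show ?thesis by auto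
  qed
  have bY: "b \<in> closure Y"
  proof -
    have "b \<in> closure YR" unfolding b_def using closure_contains_Inf[OF YRne YRb] .
    moreover have "closure YR \<subseteq> closure Y" unfolding YR_def by (rule closure_mono) auto
    ultimately show ?thesis by auto
  qed
  obtain tl where tl: "tl \<in> YL" using YLne by auto
  have "tl > 0" using tl Ypos unfolding YL_def by auto
  hence a0: "a > 0" using aub[OF tl] by linarith
  have sep: "\<forall>t\<in>Y. t \<le> a \<or> t \<ge> b"
  proof
    fix t assume t: "t \<in> Y"
    show "t \<le> a \<or> t \<ge> b"
    proof (cases "t < g")
      case True thus ?thesis using aub t unfolding YL_def by auto
    next
      case False hence "t > g" using neq[OF t] by simp
      thus ?thesis using blb t unfolding YR_def by auto
    qed
  qed
  have lf: "\<forall>t\<in>Y. t < b \<longrightarrow> (\<forall>t'. 0<t' \<and> t'<t \<longrightarrow> t' \<in> closure Y)"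
  proof (intro ballI impI)
    fix t assume t: "t \<in> Y" "t < b"
    have "\<not> t > g"
    proof
      assume "t > g" hence "t \<in> YR" using t unfolding YR_def by auto
      thus False using blb t by fastforce
    qed
    hence "t < g" using neq[OF t(1)] by simp
    thus "\<forall>t'. 0<t' \<and> t'<t \<longrightarrow> t' \<in> closure Y" using left t by auto
  qed
  have rt: "\<forall>t\<in>Y. t > a \<longrightarrow> (\<forall>t'. b<t' \<and> t'<t \<longrightarrow> t' \<in> closure Y)"
  proof (intro ballI impI allI)
    fix t t' assume t: "t \<in> Y" "t > a" and t': "b<t' \<and> t'<t"
    have "\<not> t < g"
    proof
      assume "t < g" hence "t \<in> YL" using t unfolding YL_def by auto
      thus False using aub t by fastforce
    qed
    hence tg: "t > g" using neq[OF t(1)] by simp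
    have "\<exists>t1\<in>YR. t1 < t'" using t' cInf_less_iff[OF YRne YRb] unfolding b_def by auto
    then obtain t1 where t1: "t1 \<in> YR" "t1 < t'" by blast
    have "t1 \<in> Y" "g < t1" using t1 unfolding YR_def by auto
    moreover have "t1 < t" using t1 t' by linarith
    ultimately show "t' \<in> closure Y" using right t(1) t1(2) t' by blast
  qed
  have "a < b" using ale bge e(1) by linarith
  hence "GapY Y a b" unfolding GapY_def using a0 aY bY sep lf rt by blast
  thus ?thesis by blast
qed

lemma P_inc: "0 \<le> t' \<Longrightarrow> t' < t \<Longrightarrow> t \<le> h/2 \<Longrightarrow> PP h t' < PP h t"
proof -
  assume a: "0 \<le> t'" "t' < t" "t \<le> h/2"
  have "PP h t - PP h t' = 4*(t-t')*(h - t - t')" unfolding PP_def by algebra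
  moreover have "h - t - t' > 0" using a by (simp add: field_simps)
  hence "4*(t-t')*(h - t - t') > 0" using a by (intro mult_pos_pos) auto
  ultimately show ?thesis by linarith
qed

lemma P_dec: "h/2 \<le> t \<Longrightarrow> t < t' \<Longrightarrow> PP h t' < PP h t"
proof -
  assume a: "h/2 \<le> t" "t < t'"
  have "PP h t - PP h t' = 4*(t'-t)*(t + t' - h)" unfolding PP_def by algebra
  moreover have "t + t' - h > 0" using a by (simp add: field_simps)
  hence "4*(t'-t)*(t + t' - h) > 0" using a by (intro mult_pos_pos) auto
  ultimately show ?thesis by linarith
qed

lemma P_le: "PP h t = h^2 - (2*t-h)^2" unfolding PP_def by algebra

lemma sqrt_lt_sq: assumes "0 \<le> t" "t < sqrt c" shows "t^2 < c"
proof -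
  have "sqrt c > 0" using assms by linarith
  hence c: "c > 0" using real_sqrt_gt_0_iff by blast
  have "t^2 < (sqrt c)^2" using assms by (intro power_strict_mono) auto
  thus ?thesis using c by simp
qed

context cfg begin

lemma near0: "\<exists>e>0. \<forall>t. 0 < t \<and> t < e \<longrightarrow> inY c h b t"
proof (cases "c > 0")
  case True
  define e where "e = min (min h (sqrt c)) (b/(4*h))"
  have e0: "e > 0" unfolding e_def using True h0 b0 by simp
  have "\<forall>t. 0 < t \<and> t < e \<longrightarrow> inY c h b t"
  proof (intro allI impI)
    fix t assume t: "0 < t \<and> t < e"
    have th: "t \<le> h" and tc: "t < sqrt c" and tb: "t < b/(4*h)" using t unfolding e_def by auto
    have "t^2 < c" using sqrt_lt_sq[OF _ tc] t by simp
    moreover have "PP h t \<le> b"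
    proof -
      have "PP h t \<le> 4*t*h" unfolding PP_def using t by (simp add: mult_left_mono)
      also have "4*t*h < b" using tb h0 by (simp add: field_simps)
      finally show ?thesis by simp
    qed
    ultimately show "inY c h b t" using Y2 t th by simp
  qed
  thus ?thesis using e0 by blast
next
  case False
  hence c: "c = 0" using c0 by simp
  define e where "e = min 1 (b*h/(2*h+1)^2)"
  have e0: "e > 0" unfolding e_def using h0 b0 by simp
  have "\<forall>t. 0 < t \<and> t < e \<longrightarrow> inY c h b t"
  proof (intro allI impI)
    fix t assume t: "0 < t \<and> t < e"
    have t1: "t < 1" and tb: "t < b*h/(2*h+1)^2" using t unfolding e_def by auto
    have "\<bar>t - 2*h\<bar> \<le> 2*h+1" using t t1 h0 unfolding abs_le_iff by linarith
    hence "(t - 2*h)^2 \<le> (2*h+1)^2" by (metis abs_le_square_iff abs_of_pos add_pos_pos h0 mult_pos_pos zero_less_numeral zero_less_one)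
    hence "t^2*(t-2*h)^2 \<le> t^2*(2*h+1)^2" by (simp add: mult_left_mono)
    also have "t^2*(2*h+1)^2 = t*(t*(2*h+1)^2)" by (simp add: power2_eq_square)
    also have "t*(t*(2*h+1)^2) < t*(b*h)"
    proof -
      have "t*(2*h+1)^2 < b*h" using tb h0 by (simp add: field_simps)
      thus ?thesis using t by simp
    qed
    finally have "t^2*(t-2*h)^2 < t*(b*h)" .
    moreover have "qq c h b t = t^2*(t-2*h)^2 - t*(b*h)" unfolding qq_def kk_def c by algebra
    ultimately have "qq c h b t < 0" by simp
    thus "inY c h b t" using Y1 t by simp
  qed
  thus ?thesis using e0 by blast
qed

definition T0 where "T0 = 2*h + b*h + 1 + c + 2*c/h"

lemma bound: assumes Y: "inY c h b t" shows "t < T0"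
proof (rule ccontr)
  assume "\<not> t < T0"
  hence t: "t \<ge> T0" by simp
  have cq: "2*c/h \<ge> 0" using c0 h0 by simp
  have bh: "b*h \<ge> 0" using b0 h0 by simp
  have t1a: "t \<ge> 1" "t \<ge> c + 1" "t - 2*h \<ge> b*h + 1" "t \<ge> 2*c/h"
    using t cq bh c0 h0 unfolding T0_def by linarith+
  have "h*t \<ge> h*(2*c/h)" using t1a(4) h0 by (intro mult_left_mono) auto
  moreover have "h*(2*c/h) = 2*c" using h0 by simp
  ultimately have "h*t \<ge> 2*c" by simp
  note t1 = t1a(1-3) this
  have "t^2 \<ge> t" using t1(1) by (simp add: power2_eq_square)
  hence tc: "t^2 \<ge> c" using t1(2) by linarith
  have io: "iota c h t \<ge> 0"
  proof -
    have "iota c h t = t*(h*t - 2*c) + c*h" unfolding iota_def by algebra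
    moreover have "t*(h*t - 2*c) \<ge> 0" using t1 by simp
    ultimately show ?thesis using c0 h0 by simp
  qed
  have "qq c h b t > 0"
  proof -
    have k: "kk c h t \<ge> t*(b*h+1)"
    proof -
      have "kk c h t = t*(t - 2*h) + c" unfolding kk_def by algebra
      moreover have "t*(t - 2*h) \<ge> t*(b*h+1)" using t1 by (simp add: mult_left_mono)
      ultimately show ?thesis using c0 by simp
    qed
    have p: "t*(b*h+1) > 0" using t1 h0 b0 by (intro mult_pos_pos) (auto simp: add_pos_pos)
    have "(kk c h t)^2 \<ge> (t*(b*h+1))^2" using k p by (simp add: power_mono)
    also have "(t*(b*h+1))^2 = t*(b*h+1)*(t*(b*h+1))" by (simp add: power2_eq_square)
    also have "t*(b*h+1)*(t*(b*h+1)) \<ge> t*(b*h+1)*1"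
    proof (rule mult_left_mono)
      have "b*h \<ge> 0" using h0 b0 by simp
      hence "1*1 \<le> t*(b*h+1)" using t1(1) by (intro mult_mono) auto
      thus "1 \<le> t*(b*h+1)" by simp
    qed (use p in simp)
    finally have "(kk c h t)^2 \<ge> t*b*h + t" by (simp add: algebra_simps)
    moreover have "b*(h*t - c) \<le> t*b*h" using b0 c0 by (simp add: algebra_simps)
    ultimately show ?thesis unfolding qq_def using t1 by linarith
  qed
  thus False using Y6[OF Y tc io] by simp
qed

end

definition Ys :: "real \<Rightarrow> real \<Rightarrow> real \<Rightarrow> real set" where "Ys c h b = {t. inY c h b t}"

lemma inY_cl: "inY c h b t \<Longrightarrow> t \<in> closure (Ys c h b)"
  using closure_subset[of "Ys c h b"] unfolding Ys_def by auto

lemma abs_lt_sqrt_sq: "\<bar>x\<bar> < sqrt y \<Longrightarrow> x^2 < (y::real)"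
  using sqrt_lt_sq[of "\<bar>x\<bar>" y] by simp

lemma closure_right_end: "a < b \<Longrightarrow> {a<..<b} \<subseteq> S \<Longrightarrow> (b::real) \<in> closure S"
  using closure_mono[of "{a<..<b}" S] closure_greaterThanLessThan[of a b] by auto

lemma closure_left_end: "a < b \<Longrightarrow> {a<..<b} \<subseteq> S \<Longrightarrow> (a::real) \<in> closure S"
  using closure_mono[of "{a<..<b}" S] closure_greaterThanLessThan[of a b] by auto

lemma iota_conv: "h < t' \<Longrightarrow> t' < t \<Longrightarrow> h > 0 \<Longrightarrow> (t-h)*iota c h t' \<le> (t-t')*iota c h h + (t'-h)*iota c h t"
proof -
  assume a: "h < t'" "t' < t" "h > 0"
  have "(t-h)*iota c h t' = (t-t')*iota c h h + (t'-h)*iota c h t - h*(t'-h)*(t-t')*(t-h)"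
    unfolding iota_def by algebra
  moreover have "h*(t'-h)*(t-t')*(t-h) \<ge> 0" using a by simp
  ultimately show ?thesis by linarith
qed

lemma rho_iota: "rho c h x = 3*iota c h x + 2*x*(c - h^2)"
  unfolding rho_def iota_def by algebra

context cfg begin

lemma M_int: "0 < t \<Longrightarrow> t \<le> h \<Longrightarrow> t^2 < c \<Longrightarrow> inY c h b t \<longleftrightarrow> PP h t \<le> b"
  using Y2 Y4 by blast

lemma M_bnd: assumes "t > 0" "t^2 \<ge> c" "iota c h t \<ge> 0" "h*t - c > 0"
  shows "phi c h t < b \<Longrightarrow> inY c h b t" and "inY c h b t \<Longrightarrow> phi c h t \<le> b"
proof -
  have q: "qq c h b t = (h*t - c)*(phi c h t - b)" using id6 assms(4) by simp
  show "phi c h t < b \<Longrightarrow> inY c h b t"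
  proof -
    assume "phi c h t < b"
    hence "qq c h b t < 0" unfolding q using assms(4) by (simp add: mult_pos_neg)
    thus ?thesis using Y1 assms(1) by simp
  qed
  show "inY c h b t \<Longrightarrow> phi c h t \<le> b"
  proof -
    assume "inY c h b t"
    hence "qq c h b t \<le> 0" using Y6 assms(2,3) by simp
    thus ?thesis unfolding q using assms(4) by (simp add: mult_le_0_iff)
  qed
qed

lemma small_pt: assumes "g > 0" shows "\<exists>t\<in>Ys c h b. t < g"
proof -
  obtain e where e: "e > 0" "\<forall>t. 0 < t \<and> t < e \<longrightarrow> inY c h b t" using near0 by blast
  define t where "t = min e g / 2"
  have "0 < t" "t < e" "t < g" unfolding t_def using e(1) assms by auto
  thus ?thesis using e(2) unfolding Ys_def by auto
qed

lemma Ys_pos: "\<forall>t\<in>Ys c h b. t > 0" unfolding Ys_def inY_def by auto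

lemma caseA_right: assumes cA: "c \<ge> h^2" and t: "inY c h b t" "t > h" and t': "h < t'" "t' < t"
  shows "inY c h b t'"
proof (cases "iota c h t' < 0")
  case True
  have "4*(h^2-c)*(t'*(h-t')) \<le> 4*(h^2-c)*(t*(h-t))"
  proof -
    have "t'*(t'-h) \<le> t*(t-h)" using t' t h0 by (intro mult_mono) auto
    hence "(c-h^2)*(t'*(t'-h)) \<le> (c-h^2)*(t*(t-h))" using cA by (intro mult_left_mono) auto
    thus ?thesis by (simp add: algebra_simps)
  qed
  also have "\<dots> \<le> b*h^2" using Y5[OF t(1)] .
  finally show ?thesis using Y3 t' True by simp
next
  case False
  hence io': "iota c h t' \<ge> 0" by simp
  have ih: "iota c h h \<le> 0" unfolding iota_def using cA h0 
  proof -
    have "h*h^2 - 2*c*h + c*h = h*(h^2 - c)" by algebra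
    moreover have "h*(h^2-c) \<le> 0" using cA h0 by (simp add: mult_nonneg_nonpos)
    ultimately show "h*h^2 - 2*c*h + c*h \<le> 0" by simp
  qed
  have io_gen: "\<And>x. t' < x \<Longrightarrow> iota c h x \<ge> 0"
  proof -
    fix x assume x: "t' < x"
    have "(x-h)*iota c h t' \<le> (x-t')*iota c h h + (t'-h)*iota c h x" using iota_conv[OF t'(1) x h0] .
    moreover have "(x-t')*iota c h h \<le> 0" using x ih by (simp add: mult_nonneg_nonpos)
    moreover have "(x-h)*iota c h t' \<ge> 0" using x t' io' by simp
    ultimately have "(t'-h)*iota c h x \<ge> 0" by linarith
    thus "iota c h x \<ge> 0" using t' by (simp add: zero_le_mult_iff)
  qed
  have iot: "iota c h t \<ge> 0" using io_gen t' by simp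
  have pos: "\<And>x. x > h \<Longrightarrow> iota c h x \<ge> 0 \<Longrightarrow> h*x - c > 0"
  proof (rule ccontr)
    fix x assume x: "x > h" "iota c h x \<ge> 0" "\<not> h*x - c > 0"
    have "h*x*x \<le> c*x" using x h0 by (intro mult_right_mono) auto
    hence "iota c h x \<le> c*x - 2*c*x + c*h" unfolding iota_def by (simp add: power2_eq_square algebra_simps)
    also have "\<dots> = c*(h - x)" by algebra
    also have "\<dots> < 0"
    proof -
      have "c > 0" using cA h0 by (smt (verit) zero_less_power)
      moreover have "h - x < 0" using x by simp
      ultimately show ?thesis by (simp add: mult_pos_neg)
    qed
    finally show False using x by simp
  qed
  have sqc: "\<And>x. x > h \<Longrightarrow> iota c h x \<ge> 0 \<Longrightarrow> x^2 \<ge> c"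
  proof (rule ccontr)
    fix x assume x: "x > h" "iota c h x \<ge> 0" "\<not> x^2 \<ge> c"
    have "h*(x^2+c) < x*(x^2+c)" using x h0 c0 by (intro mult_strict_right_mono) (auto simp: add_pos_nonneg)
    moreover have "x*(x^2+c) - 2*c*x = x*(x^2-c)" by algebra
    moreover have "x*(x^2-c) < 0" using x h0 by (simp add: mult_pos_neg)
    moreover have "iota c h x = h*(x^2+c) - 2*c*x" unfolding iota_def by algebra
    ultimately show False using x by linarith
  qed
  have pt: "h*t - c > 0" using pos t iot by simp
  have pt': "h*t' - c > 0" using pos t' io' by simp
  have "phi c h t \<le> b" using M_bnd(2)[of t] t sqc iot pt h0 by auto
  moreover have "phi c h t' < phi c h t"
  proof (rule phi_inc[OF t'(2) pt' h0])
    fix x assume x: "t' < x" "x < t"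
    have xh: "x > h" using x t' by simp
    have "kk c h x = (x-h)^2 + (c - h^2)" unfolding kk_def by algebra
    moreover have "(x-h)^2 > 0" using xh by simp
    ultimately have kp: "kk c h x > 0" using cA by linarith
    have iox: "iota c h x \<ge> 0" using io_gen x by simp
    have rp: "rho c h x > 0"
    proof (rule ccontr)
      assume "\<not> rho c h x > 0"
      hence "3*iota c h x + 2*x*(c - h^2) \<le> 0" using rho_iota by simp
      moreover have "2*x*(c-h^2) \<ge> 0" using xh h0 cA by simp
      ultimately have z: "iota c h x = 0" "2*x*(c-h^2) = 0" using iox by linarith+
      hence "c = h^2" using xh h0 by simp
      hence e1: "iota c h x = h*(x-h)^2" unfolding iota_def by algebra
      have e2: "h*(x-h)^2 > 0" using xh h0 by simp
      show False using e1 e2 z(1) by linarith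
    qed
    show "kk c h x * rho c h x > 0" using kp rp by simp
  qed
  ultimately have "phi c h t' < b" by simp
  thus ?thesis using M_bnd(1)[of t'] t' sqc io' pt' h0 by auto
qed

lemma caseA: assumes cA: "c \<ge> h^2"
  shows "b \<ge> h^2 \<Longrightarrow> NoGapY (Ys c h b)" and "b < h^2 \<Longrightarrow> \<exists>a1 a2. GapY (Ys c h b) a1 a2"
proof -
  have int: "\<And>t. 0 < t \<Longrightarrow> t < h \<Longrightarrow> inY c h b t \<longleftrightarrow> PP h t \<le> b"
  proof -
    fix t assume t: "0 < t" "t < h"
    have "t^2 < h^2" using t by (intro power_strict_mono) auto
    hence "t^2 < c" using cA by linarith
    thus "inY c h b t \<longleftrightarrow> PP h t \<le> b" using M_int[of t] t by linarith
  qed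
  show "b \<ge> h^2 \<Longrightarrow> NoGapY (Ys c h b)"
  proof -
    assume bh: "b \<ge> h^2"
    have sub: "{0<..<h} \<subseteq> Ys c h b"
    proof
      fix x assume x: "x \<in> {0<..<h}"
      have "PP h x \<le> b"
      proof -
        have "(2*x-h)^2 \<ge> 0" by simp
        thus ?thesis using P_le[of h x] bh by linarith
      qed
      moreover have "0 < x" "x < h" using x by auto
      ultimately have "inY c h b x" using int by blast
      thus "x \<in> Ys c h b" unfolding Ys_def by simp
    qed
    show ?thesis unfolding NoGapY_def
    proof (intro ballI allI impI)
      fix t t' assume t: "t \<in> Ys c h b" and t': "0 < t' \<and> t' < t"
      show "t' \<in> closure (Ys c h b)"
      proof (cases "t' < h")
        case True
        hence "t' \<in> {0<..<h}" using t' by simp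
        hence "t' \<in> Ys c h b" using sub by blast
        thus ?thesis using inY_cl[of c h b t'] unfolding Ys_def by simp
      next
        case False
        show ?thesis
        proof (cases "t' = h")
          case True thus ?thesis using closure_right_end[OF h0 sub] by simp
        next
          case False
          hence "t' > h" using \<open>\<not> t' < h\<close> by simp
          moreover have "inY c h b t" using t unfolding Ys_def by simp
          ultimately have "inY c h b t'" using caseA_right[OF cA, of t t'] t' by simp
          thus ?thesis by (rule inY_cl)
        qed
      qed
    qed
  qed
  show "b < h^2 \<Longrightarrow> \<exists>a1 a2. GapY (Ys c h b) a1 a2"
  proof -
    assume bh: "b < h^2"
    define e where "e = min (h/2) (sqrt (h^2 - b)/2)"
    have e0: "e > 0" unfolding e_def using h0 bh by simp
    show ?thesis
    proof (rule gap_from_g[OF Ys_pos e0, of "h/2"])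
      show "\<forall>t\<in>Ys c h b. e \<le> \<bar>t - h/2\<bar>"
      proof (rule ballI, rule ccontr)
        fix t assume t: "t \<in> Ys c h b" "\<not> e \<le> \<bar>t - h/2\<bar>"
        hence lt: "\<bar>t - h/2\<bar> < e" by simp
        have e1: "2*e \<le> h" "2*e \<le> sqrt (h^2-b)" unfolding e_def by auto
        have ee: "\<bar>2*t - h\<bar> = 2*\<bar>t - h/2\<bar>"
        proof -
          have "2*t - h = 2*(t - h/2)" by simp
          thus ?thesis by (simp only: abs_mult)
        qed
        have a1: "\<bar>2*t - h\<bar> < h" using lt ee e1 by linarith
        have t0a: "t > 0" using a1 unfolding abs_less_iff by linarith
        have t0b: "t < h" using a1 unfolding abs_less_iff by linarith
        note t0 = t0a t0b
        have "\<bar>2*t - h\<bar> < sqrt (h^2 - b)" using lt ee e1 by linarith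
        hence "(2*t-h)^2 < h^2 - b" using abs_lt_sqrt_sq by blast
        hence "PP h t > b" using P_le[of h t] by simp
        moreover have "PP h t \<le> b" using int[OF t0] t(1) unfolding Ys_def by auto
        ultimately show False by simp
      qed
      show "\<exists>t\<in>Ys c h b. t < h/2" using small_pt[of "h/2"] h0 by linarith
      define tR where "tR = (h + sqrt (h^2-b))/2"
      have s1: "sqrt (h^2 - b) < h"
      proof -
        have "sqrt (h^2 - b) < sqrt (h^2)" using b0 by (intro real_sqrt_less_mono) simp
        thus ?thesis using h0 by simp
      qed
      have s0: "sqrt (h^2 - b) > 0" using bh by simp
      define sq where "sq = sqrt (h^2 - b)"
      have sq: "sq > 0" "sq < h" using s0 s1 unfolding sq_def by auto
      have tRe: "tR = (h + sq)/2" unfolding tR_def sq_def by simp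
      have tR1: "tR > h/2" unfolding tRe using sq by (simp add: field_simps)
      have tR2: "tR < h" unfolding tRe using sq by (simp add: field_simps)
      have tR3: "tR > 0" unfolding tRe using sq h0 by (simp add: field_simps)
      note tR = tR1 tR2 tR3
      have "PP h tR = b"
      proof -
        have "2*tR - h = sq" unfolding tRe by (simp add: field_simps)
        hence "(2*tR - h)^2 = h^2 - b" unfolding sq_def using bh by simp
        thus ?thesis using P_le[of h tR] by simp
      qed
      hence "tR \<in> Ys c h b" using int tR unfolding Ys_def by simp
      thus "\<exists>t\<in>Ys c h b. t > h/2" using tR by blast
      show "\<forall>t\<in>Ys c h b. t < h/2 \<longrightarrow> (\<forall>t'. 0 < t' \<and> t' < t \<longrightarrow> t' \<in> closure (Ys c h b))"
      proof (intro ballI impI allI)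
        fix t t' assume t: "t \<in> Ys c h b" "t < h/2" and t': "0 < t' \<and> t' < t"
        have tp: "t > 0" using t Ys_pos by auto
        have "PP h t \<le> b" using int[of t] t tp h0 unfolding Ys_def by (simp add: field_simps)
        moreover have "PP h t' < PP h t" using P_inc[of t' t h] t t' by simp
        ultimately have "inY c h b t'" using int[of t'] t' t h0 by (simp add: field_simps)
        thus "t' \<in> closure (Ys c h b)" by (rule inY_cl)
      qed
      have mid: "\<And>t1 t'. t1 \<in> Ys c h b \<Longrightarrow> h/2 < t1 \<Longrightarrow> t1 < t' \<Longrightarrow> t' < h \<Longrightarrow> inY c h b t'"
      proof -
        fix t1 t' assume a: "t1 \<in> Ys c h b" "h/2 < t1" "t1 < t'" "t' < h"
        have "PP h t1 \<le> b" using int[of t1] a h0 unfolding Ys_def by (simp add: field_simps)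
        moreover have "PP h t' < PP h t1" using P_dec[of h t1 t'] a by simp
        ultimately show "inY c h b t'" using int[of t'] a h0 by (simp add: field_simps)
      qed
      show "\<forall>t1\<in>Ys c h b. \<forall>t2\<in>Ys c h b. h/2 < t1 \<longrightarrow> t1 < t2 \<longrightarrow> (\<forall>t'. t1 < t' \<and> t' < t2 \<longrightarrow> t' \<in> closure (Ys c h b))"
      proof (intro ballI impI allI)
        fix t1 t2 t' assume t1: "t1 \<in> Ys c h b" "h/2 < t1" and t12: "t1 < t2" and t2: "t2 \<in> Ys c h b"
          and t': "t1 < t' \<and> t' < t2"
        show "t' \<in> closure (Ys c h b)"
        proof (cases "t' < h")
          case True thus ?thesis using mid[OF t1, of t'] t' inY_cl[of c h b t'] by simp
        next
          case False
          show ?thesis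
          proof (cases "t' = h")
            case True
            have "{t1<..<h} \<subseteq> Ys c h b" using mid[OF t1] unfolding Ys_def by auto
            thus ?thesis using closure_right_end[of t1 h] True t' by auto
          next
            case False
            hence "t' > h" using \<open>\<not> t' < h\<close> by simp
            moreover have "inY c h b t2" using t2 unfolding Ys_def by simp
            ultimately have "inY c h b t'" using caseA_right[OF cA, of t2 t'] t' by simp
            thus ?thesis by (rule inY_cl)
          qed
        qed
      qed
    qed
  qed
qed

end

context cfg begin

definition sE where "sE = sqrt (h^2 - c)"
definition ts where "ts = h + sE"

lemma sqc_lt_h: "c < h^2 \<Longrightarrow> sqrt c < h"
proof -
  assume "c < h^2"
  hence "sqrt c < sqrt (h^2)" by (intro real_sqrt_less_mono)
  thus ?thesis using h0 by simp
qed

lemma sqc_sq: "(sqrt c)^2 = c" using c0 by simp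

lemma B_iota: "c \<le> h^2 \<Longrightarrow> iota c h t \<ge> 0"
proof -
  assume cB: "c \<le> h^2"
  have "h*iota c h t = (h*t-c)^2 + c*(h^2-c)" unfolding iota_def by algebra
  moreover have "c*(h^2-c) \<ge> 0" using cB c0 by simp
  ultimately have "h*iota c h t \<ge> 0" by (smt (verit) zero_le_power2)
  thus ?thesis using h0 by (simp add: zero_le_mult_iff)
qed

lemma B_pos: assumes cB: "c < h^2" and t: "t > 0" "t \<ge> sqrt c" shows "h*t - c > 0" "t^2 \<ge> c"
proof -
  have "t^2 \<ge> (sqrt c)^2" using t c0 by (intro power_mono) auto
  thus "t^2 \<ge> c" using sqc_sq by simp
  show "h*t - c > 0"
  proof (cases "c = 0")
    case True thus ?thesis using h0 t by simp
  next
    case False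
    hence sc: "sqrt c > 0" using c0 by simp
    have "h*t \<ge> h* sqrt c" using t h0 by (intro mult_left_mono) auto
    moreover have "h* sqrt c > sqrt c * sqrt c" using sqc_lt_h[OF cB] sc by (intro mult_strict_right_mono) auto
    moreover have "sqrt c * sqrt c = c" using c0 by simp
    ultimately show ?thesis by linarith
  qed
qed

lemma B_sE: "c < h^2 \<Longrightarrow> sE > 0 \<and> sE^2 = h^2 - c \<and> h - sqrt c \<le> sE"
proof -
  assume cB: "c < h^2"
  have s1: "sE > 0" "sE^2 = h^2 - c" unfolding sE_def using cB by auto
  have "(h - sqrt c)^2 \<le> h^2 - c"
  proof -
    have "(h - sqrt c)^2 = h^2 - 2*h* sqrt c + c" using sqc_sq by (simp add: power2_diff)
    moreover have "sqrt c * sqrt c \<le> h * sqrt c" using sqc_lt_h[OF cB] c0 by (intro mult_right_mono) auto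
    moreover have "sqrt c * sqrt c = c" using c0 by simp
    ultimately show ?thesis by linarith
  qed
  hence "h - sqrt c \<le> sE" unfolding sE_def using real_le_rsqrt by blast
  thus ?thesis using s1 by simp
qed

lemma kk_sE: "kk c h x = (x-h)^2 - (h^2 - c)" unfolding kk_def by algebra

lemma B_kk_neg: assumes cB: "c < h^2" and x: "sqrt c < x" "x < ts" shows "kk c h x < 0"
proof -
  have s: "sE > 0" "sE^2 = h^2 - c" "h - sqrt c \<le> sE" using B_sE[OF cB] by auto
  have "\<bar>x - h\<bar> < sE" using x s unfolding ts_def abs_less_iff by linarith
  hence "\<bar>x - h\<bar>^2 < sE^2" by (intro power_strict_mono) auto
  hence "(x-h)^2 < h^2 - c" using s by simp
  thus ?thesis unfolding kk_sE by simp
qed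

lemma B_kk_pos: assumes cB: "c < h^2" and x: "x > ts" shows "kk c h x > 0"
proof -
  have s: "sE > 0" "sE^2 = h^2 - c" using B_sE[OF cB] by auto
  have "x - h > sE" using x unfolding ts_def by simp
  hence "(x - h)^2 > sE^2" using s by (intro power_strict_mono) auto
  thus ?thesis unfolding kk_sE using s by simp
qed

lemma B_kk_ts: "c < h^2 \<Longrightarrow> kk c h ts = 0"
  using B_sE unfolding kk_sE ts_def by simp

lemma B_ts: assumes cB: "c < h^2" shows "ts > h" "ts > sqrt c" "ts > 0" "phi c h ts = 0" "inY c h b ts"
proof -
  show th: "ts > h" using B_sE[OF cB] unfolding ts_def by simp
  thus tc: "ts > sqrt c" using sqc_lt_h[OF cB] by simp
  thus tp: "ts > 0" using th h0 by simp
  show ph: "phi c h ts = 0" unfolding phi_def using B_kk_ts[OF cB] by simp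
  show "inY c h b ts" using M_bnd(1)[of ts] B_pos[OF cB tp] tc B_iota cB b0 ph tp by simp
qed

lemma B_phi_P: assumes cB: "c < h^2" and cp: "c > 0" shows "phi c h (sqrt c) = PP h (sqrt c)"
proof -
  have p: "h* sqrt c - c > 0" using B_pos[OF cB, of "sqrt c"] cp by simp
  have "(kk c h (sqrt c))^2 - 4* sqrt c*(h - sqrt c)*(h* sqrt c - c) = ((sqrt c)^2 - c)^2" using id4 .
  hence "(kk c h (sqrt c))^2 = 4* sqrt c*(h - sqrt c)*(h* sqrt c - c)" using sqc_sq by simp
  thus ?thesis unfolding phi_def PP_def using p by simp
qed

lemma B_int: assumes cB: "c < h^2" and t: "0 < t" "t < sqrt c" shows "inY c h b t \<longleftrightarrow> PP h t \<le> b"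
proof -
  have "t \<le> h" using t sqc_lt_h[OF cB] by simp
  moreover have "t^2 < c" using sqrt_lt_sq t by simp
  ultimately show ?thesis using M_int t by simp
qed

lemma B_bnd: assumes cB: "c < h^2" and t: "t > 0" "t \<ge> sqrt c"
  shows "phi c h t < b \<Longrightarrow> inY c h b t" and "inY c h b t \<Longrightarrow> phi c h t \<le> b"
  using M_bnd[of t] B_pos[OF cB t] B_iota cB t by auto

end

lemma rho_sq: "12*h*rho c h x = (6*h*x - 4*c - 2*h^2)^2 - 4*(h^2-c)*(h^2-4*c)"
  unfolding rho_def by algebra

context cfg begin

lemma B_S4: assumes cB: "c < h^2" and rp: "\<And>x. x > ts \<Longrightarrow> rho c h x > 0"
  and t: "ts \<le> t1" "t1 < t2" shows "phi c h t1 < phi c h t2"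
proof (rule phi_inc[OF t(2) _ h0])
  show "h*t1 - c > 0" using B_pos[OF cB, of t1] B_ts[OF cB] t by simp
  fix x assume "t1 < x" "x < t2"
  hence "x > ts" using t by simp
  thus "kk c h x * rho c h x > 0" using B_kk_pos[OF cB] rp by simp
qed

lemma B_S3: assumes cB: "c < h^2" and rp: "\<And>x. sqrt c < x \<Longrightarrow> x < ts \<Longrightarrow> rho c h x > 0"
  and t: "sqrt c \<le> t1" "t1 < t2" "t2 \<le> ts" "t1 > 0" shows "phi c h t2 < phi c h t1"
proof (rule phi_dec[OF t(2) _ h0])
  show "h*t1 - c > 0" using B_pos[OF cB, of t1] t by simp
  fix x assume "t1 < x" "x < t2"
  hence "sqrt c < x" "x < ts" using t by simp_all
  thus "kk c h x * rho c h x < 0" using B_kk_neg[OF cB] rp by (simp add: mult_neg_pos)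
qed

lemma caseB1: assumes cB: "c < h^2" and c4: "h^2 < 4*c"
  shows "b \<ge> h^2 \<Longrightarrow> NoGapY (Ys c h b)" and "b < h^2 \<Longrightarrow> \<exists>a1 a2. GapY (Ys c h b) a1 a2"
proof -
  have cp: "c > 0" using c4 h0 by (smt (verit) zero_less_power)
  have rp: "\<And>x. rho c h x > 0"
  proof -
    fix x
    have "(h^2-c)*(h^2-4*c) < 0" using cB c4 by (simp add: mult_pos_neg)
    hence y: "4*((h^2-c)*(h^2-4*c)) < 0" by simp
    hence y: "4*(h^2-c)*(h^2-4*c) < 0" by (simp only: mult.assoc)
    have "(6*h*x - 4*c - 2*h^2)^2 \<ge> 0" by simp
    hence "12*h*rho c h x > 0" unfolding rho_sq using y by linarith
    thus "rho c h x > 0" using h0 by (simp add: zero_less_mult_iff)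
  qed
  have hc: "h < 2* sqrt c"
  proof -
    have "sqrt (h^2) < sqrt (4*c)" using c4 by (intro real_sqrt_less_mono)
    moreover have "sqrt (4*c) = 2* sqrt c" by (simp add: real_sqrt_mult)
    ultimately show ?thesis using h0 by simp
  qed
  have sch: "sqrt c < h" using sqc_lt_h[OF cB] .
  have scp: "sqrt c > 0" using cp by simp
  have tsp: "ts > h" "ts > sqrt c" "ts > 0" "phi c h ts = 0" "inY c h b ts" using B_ts[OF cB] by auto
  have S3: "\<And>t1 t2. sqrt c \<le> t1 \<Longrightarrow> t1 < t2 \<Longrightarrow> t2 \<le> ts \<Longrightarrow> phi c h t2 < phi c h t1"
    using B_S3[OF cB] rp scp by (meson less_le_trans)
  have S4: "\<And>t1 t2. ts \<le> t1 \<Longrightarrow> t1 < t2 \<Longrightarrow> phi c h t1 < phi c h t2"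
    using B_S4[OF cB] rp by blast
  have phP: "phi c h (sqrt c) = PP h (sqrt c)" using B_phi_P[OF cB cp] .
  have Ph: "\<And>x. PP h x \<le> h^2"
  proof -
    fix x have "(2*x-h)^2 \<ge> 0" by simp
    thus "PP h x \<le> h^2" using P_le[of h x] by linarith
  qed
  have bnd1: "\<And>t. t > 0 \<Longrightarrow> t \<ge> sqrt c \<Longrightarrow> phi c h t < b \<Longrightarrow> inY c h b t" using B_bnd(1)[OF cB] by blast
  have bnd2: "\<And>t. t > 0 \<Longrightarrow> t \<ge> sqrt c \<Longrightarrow> inY c h b t \<Longrightarrow> phi c h t \<le> b" using B_bnd(2)[OF cB] by blast
  have int: "\<And>t. 0 < t \<Longrightarrow> t < sqrt c \<Longrightarrow> inY c h b t \<longleftrightarrow> PP h t \<le> b" using B_int[OF cB] by blast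
  have Ypos: "\<And>t. inY c h b t \<Longrightarrow> t > 0" unfolding inY_def by simp
  show "b \<ge> h^2 \<Longrightarrow> NoGapY (Ys c h b)"
  proof -
    assume bh: "b \<ge> h^2"
    have mid: "\<And>x. sqrt c < x \<Longrightarrow> x \<le> ts \<Longrightarrow> inY c h b x"
    proof -
      fix x assume x: "sqrt c < x" "x \<le> ts"
      have "phi c h x < phi c h (sqrt c)" using S3[of "sqrt c" x] x by simp
      also have "\<dots> \<le> b" using phP Ph[of "sqrt c"] bh by simp
      finally show "inY c h b x" using bnd1[of x] x scp by simp
    qed
    show ?thesis unfolding NoGapY_def
    proof (intro ballI allI impI)
      fix t t' assume t: "t \<in> Ys c h b" and t': "0 < t' \<and> t' < t"
      have tY: "inY c h b t" using t unfolding Ys_def by simp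
      show "t' \<in> closure (Ys c h b)"
      proof (cases "t' < sqrt c")
        case True
        hence "inY c h b t'" using int[of t'] Ph[of t'] bh t' by simp
        thus ?thesis by (rule inY_cl)
      next
        case False
        show ?thesis
        proof (cases "t' = sqrt c")
          case True
          have "{sqrt c<..<ts} \<subseteq> Ys c h b" using mid unfolding Ys_def by auto
          thus ?thesis using closure_left_end[of "sqrt c" ts] tsp True by simp
        next
          case False
          hence t'c: "t' > sqrt c" using \<open>\<not> t' < sqrt c\<close> by simp
          show ?thesis
          proof (cases "t' \<le> ts")
            case True thus ?thesis using mid t'c inY_cl by blast
          next
            case False
            hence "ts < t'" by simp
            hence "phi c h t' < phi c h t" using S4[of t' t] t' by simp
            also have "\<dots> \<le> b" using bnd2[of t] tY Ypos[OF tY] t' t'c by simp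
            finally have "inY c h b t'" using bnd1[of t'] t' t'c by simp
            thus ?thesis by (rule inY_cl)
          qed
        qed
      qed
    qed
  qed
  show "b < h^2 \<Longrightarrow> \<exists>a1 a2. GapY (Ys c h b) a1 a2"
  proof -
    assume bh: "b < h^2"
    define m where "m = h/2"
    have hm: "h = 2*m" unfolding m_def by simp
    have mc: "m < sqrt c" using hc hm by simp
    define e where "e = min (sqrt c - m) (sqrt (h^2 - b)/2)"
    have e0: "e > 0" unfolding e_def using mc bh by simp
    show ?thesis
    proof (rule gap_from_g[OF Ys_pos e0, of m])
      show "\<forall>t\<in>Ys c h b. e \<le> \<bar>t - m\<bar>"
      proof (rule ballI, rule ccontr)
        fix t assume t: "t \<in> Ys c h b" "\<not> e \<le> \<bar>t - m\<bar>"
        hence lt: "\<bar>t - m\<bar> < e" by simp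
        have e1a: "e \<le> sqrt c - m" unfolding e_def by (rule min.cobounded1)
        have "e \<le> sqrt (h^2-b)/2" unfolding e_def by (rule min.cobounded2)
        hence e1b: "2*e \<le> sqrt (h^2-b)" by (simp add: field_simps)
        note e1 = e1a e1b
        have ee: "\<bar>2*t - h\<bar> = 2*\<bar>t - m\<bar>"
        proof -
          have "2*t - h = 2*(t - m)" using hm by simp
          thus ?thesis by (simp only: abs_mult)
        qed
        have tY: "inY c h b t" using t unfolding Ys_def by simp
        have t0: "t > 0" using Ypos[OF tY] .
        have t1: "t < sqrt c" using lt e1 unfolding abs_less_iff by linarith
        have "2*\<bar>t - m\<bar> < 2*e" using lt by simp
        hence "\<bar>2*t - h\<bar> < sqrt (h^2 - b)" unfolding ee using e1b by linarith
        hence "(2*t-h)^2 < h^2 - b" using abs_lt_sqrt_sq by blast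
        hence "PP h t > b" using P_le[of h t] by simp
        moreover have "PP h t \<le> b" using int[OF t0 t1] tY by simp
        ultimately show False by simp
      qed
      show "\<exists>t\<in>Ys c h b. t < m" using small_pt[of m] h0 hm by simp
      show "\<exists>t\<in>Ys c h b. t > m" using tsp hm h0 unfolding Ys_def by (intro bexI[of _ ts]) auto
      show "\<forall>t\<in>Ys c h b. t < m \<longrightarrow> (\<forall>t'. 0 < t' \<and> t' < t \<longrightarrow> t' \<in> closure (Ys c h b))"
      proof (intro ballI impI allI)
        fix t t' assume t: "t \<in> Ys c h b" "t < m" and t': "0 < t' \<and> t' < t"
        have tY: "inY c h b t" using t unfolding Ys_def by simp
        have "PP h t \<le> b" using int[of t] tY Ypos[OF tY] t mc by simp
        moreover have "PP h t' < PP h t" using P_inc[of t' t h] t t' hm by simp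
        ultimately have "inY c h b t'" using int[of t'] t' t mc by simp
        thus "t' \<in> closure (Ys c h b)" by (rule inY_cl)
      qed
      show "\<forall>t1\<in>Ys c h b. \<forall>t2\<in>Ys c h b. m < t1 \<longrightarrow> t1 < t2 \<longrightarrow> (\<forall>t'. t1 < t' \<and> t' < t2 \<longrightarrow> t' \<in> closure (Ys c h b))"
      proof (intro ballI impI allI)
        fix t1 t2 t' assume t1: "t1 \<in> Ys c h b" "m < t1" and t12: "t1 < t2" and t2: "t2 \<in> Ys c h b"
          and t': "t1 < t' \<and> t' < t2"
        have t1Y: "inY c h b t1" and t2Y: "inY c h b t2" using t1 t2 unfolding Ys_def by auto
        have t1p: "t1 > 0" using Ypos[OF t1Y] .
        have "inY c h b t'"
        proof (cases "t' < sqrt c")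
          case True
          have "PP h t1 \<le> b" using int[of t1] t1Y t1p t' True by simp
          moreover have "PP h t' < PP h t1" using P_dec[of h t1 t'] t1 t' hm by simp
          ultimately show ?thesis using int[of t'] t' t1p True by simp
        next
          case False
          hence t'c: "t' \<ge> sqrt c" by simp
          show ?thesis
          proof (cases "t' \<le> ts")
            case True
            have "phi c h t' < b"
            proof (cases "t1 < sqrt c")
              case True
              have "PP h t1 \<le> b" using int[of t1] t1Y t1p True by simp
              moreover have "PP h (sqrt c) < PP h t1" using P_dec[of h t1 "sqrt c"] t1 True hm by simp
              moreover have "phi c h t' \<le> phi c h (sqrt c)"
                using S3[of "sqrt c" t'] t'c \<open>t' \<le> ts\<close> by (cases "t' = sqrt c") auto
              ultimately show ?thesis using phP by simp
            next
              case False
              hence "phi c h t1 \<le> b" using bnd2[of t1] t1Y t1p by simp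
              moreover have "phi c h t' < phi c h t1" using S3[of t1 t'] False t' \<open>t' \<le> ts\<close> by simp
              ultimately show ?thesis by simp
            qed
            thus ?thesis using bnd1[of t'] t'c scp by simp
          next
            case False
            have "phi c h t' < phi c h t2" using S4[of t' t2] False t' by simp
            also have "\<dots> \<le> b" using bnd2[of t2] t2Y Ypos[OF t2Y] t' t'c by simp
            finally show ?thesis using bnd1[of t'] t'c scp by simp
          qed
        qed
        thus "t' \<in> closure (Ys c h b)" by (rule inY_cl)
      qed
    qed
  qed
qed

end

definition RR :: "real \<Rightarrow> real \<Rightarrow> real" where "RR c h = sqrt ((h^2-c)*(h^2-4*c))"
definition r1g :: "real \<Rightarrow> real \<Rightarrow> real" where "r1g c h = ((4*c + 2*h^2) - 2*RR c h)/(6*h)"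
definition r2g :: "real \<Rightarrow> real \<Rightarrow> real" where "r2g c h = ((4*c + 2*h^2) + 2*RR c h)/(6*h)"
definition Mx :: "real \<Rightarrow> real \<Rightarrow> real" where "Mx c h = phi c h (r2g c h)"

lemma cont_nbhd: fixes f :: "real \<Rightarrow> real" assumes "isCont f x" "f x > b"
  shows "\<exists>e>0. \<forall>y. \<bar>y - x\<bar> < e \<longrightarrow> f y > b"
proof -
  have "(f \<longlongrightarrow> f x) (at x)" using assms(1) isCont_def by blast
  hence "eventually (\<lambda>y. f y > b) (at x)" using assms(2) order_tendstoD(1) by blast
  then obtain e where e: "e > 0" "\<forall>y\<in>UNIV. y \<noteq> x \<and> dist y x < e \<longrightarrow> f y > b"
    unfolding eventually_at by blast
  have "\<forall>y. \<bar>y - x\<bar> < e \<longrightarrow> f y > b"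
  proof (intro allI impI)
    fix y assume "\<bar>y - x\<bar> < e"
    thus "f y > b" using e assms(2) by (cases "y = x") (auto simp: dist_real_def)
  qed
  thus ?thesis using e(1) by blast
qed

lemma phi_isCont: "h*x - c \<noteq> 0 \<Longrightarrow> isCont (phi c h) x"
  using phi_deriv DERIV_isCont by blast

lemma P_isCont: "isCont (PP h) x" unfolding PP_def by (intro continuous_intros)

lemma B2_roots: assumes h0: "h > 0" and c0: "c \<ge> 0" and c4: "4*c \<le> h^2"
  shows "rho c h x = 3*h*(x - r1g c h)*(x - r2g c h)"
    and "r1g c h \<le> sqrt c" "sqrt c \<le> r2g c h" "r2g c h \<le> h" "r2g c h > 0" "r1g c h \<le> r2g c h"
proof -
  define R where "R = RR c h"
  have R0: "R \<ge> 0" unfolding R_def RR_def using c4 c0 by simp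
  have R2: "R^2 = (h^2-c)*(h^2-4*c)" unfolding R_def RR_def using c4 c0 by simp
  have sum: "r1g c h + r2g c h = (4*c + 2*h^2)/(3*h)" unfolding r1g_def r2g_def R_def[symmetric]
    using h0 by (simp add: field_simps)
  have prod: "r1g c h * r2g c h = c"
  proof -
    have "r1g c h * r2g c h = ((4*c + 2*h^2)^2 - 4*R^2)/(36*h^2)" unfolding r1g_def r2g_def R_def[symmetric]
      using h0 by (simp add: field_simps power2_eq_square)
    also have "(4*c + 2*h^2)^2 - 4*R^2 = 36*h^2*c" unfolding R2 by algebra
    finally show ?thesis using h0 by simp
  qed
  have rfa: "\<And>y. rho c h y = 3*h*(y - r1g c h)*(y - r2g c h)"
  proof -
    fix y
    have "3*h*(y - r1g c h)*(y - r2g c h) = 3*h*(y^2 - (r1g c h + r2g c h)*y + r1g c h * r2g c h)"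
      by (simp add: algebra_simps power2_eq_square)
    also have "\<dots> = 3*h*y^2 - (4*c + 2*h^2)*y + 3*h*c" unfolding sum prod using h0 by (simp add: field_simps)
    finally show "rho c h y = 3*h*(y - r1g c h)*(y - r2g c h)" unfolding rho_def by simp
  qed
  thus "rho c h x = 3*h*(x - r1g c h)*(x - r2g c h)" by blast
  note rf = rfa
  have R0': "RR c h \<ge> 0" using R0 unfolding R_def .
  show r12: "r1g c h \<le> r2g c h" unfolding r1g_def r2g_def using R0' h0 by (simp add: field_simps)
  have "(4*c + 2*h^2) + 2*RR c h > 0" using R0' h0 c0 by (smt (verit) zero_less_power)
  thus "r2g c h > 0" unfolding r2g_def using h0 by simp
  have rs: "rho c h (sqrt c) \<le> 0"
  proof -
    define w0 where "w0 = sqrt c"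
    have cs: "c = w0^2" unfolding w0_def using c0 by simp
    have s0: "w0 \<ge> 0" unfolding w0_def using c0 by simp
    have "sqrt (4*c) \<le> sqrt (h^2)" using c4 by (intro real_sqrt_le_mono)
    hence "2*w0 \<le> h" unfolding w0_def using h0 by (simp add: real_sqrt_mult)
    hence a: "h - 2*w0 \<ge> 0" "h - w0 \<ge> 0" using s0 by simp_all
    have "rho c h w0 = -(2*w0*((h - w0)*(h - 2*w0)))" unfolding rho_def cs by algebra
    moreover have "2*w0*((h - w0)*(h - 2*w0)) \<ge> 0" using a s0 by simp
    ultimately show ?thesis unfolding w0_def by simp
  qed
  show "r1g c h \<le> sqrt c"
  proof (rule ccontr)
    assume "\<not> r1g c h \<le> sqrt c"
    hence "sqrt c - r1g c h < 0" "sqrt c - r2g c h < 0" using r12 by simp_all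
    hence "(sqrt c - r1g c h)*(sqrt c - r2g c h) > 0" by (simp add: mult_neg_neg)
    hence "3*h*((sqrt c - r1g c h)*(sqrt c - r2g c h)) > 0" using h0 by simp
    thus False using rs rf[of "sqrt c"] by (simp add: mult.assoc)
  qed
  show "sqrt c \<le> r2g c h"
  proof (rule ccontr)
    assume "\<not> sqrt c \<le> r2g c h"
    hence "sqrt c - r1g c h > 0" "sqrt c - r2g c h > 0" using r12 by simp_all
    hence "(sqrt c - r1g c h)*(sqrt c - r2g c h) > 0" by simp
    hence "3*h*((sqrt c - r1g c h)*(sqrt c - r2g c h)) > 0" using h0 by simp
    thus False using rs rf[of "sqrt c"] by (simp add: mult.assoc)
  qed
  show "r2g c h \<le> h"
  proof -
    have "(h^2-c)*(h^2-4*c) \<le> (2*(h^2-c))^2"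
    proof -
      have "(2*(h^2-c))^2 = (h^2-c)*(4*(h^2-c))" by algebra
      moreover have "h^2 - c \<ge> 0" using c4 c0 by simp
      moreover have "h^2 - 4*c \<le> 4*(h^2-c)" using c0 by simp
      ultimately show ?thesis by (simp add: mult_left_mono)
    qed
    hence "R \<le> sqrt ((2*(h^2-c))^2)" unfolding R_def RR_def by (intro real_sqrt_le_mono)
    also have "\<dots> = 2*(h^2-c)" using c4 c0 by simp
    finally have "4*c + 2*h^2 + 2*R \<le> 6*h*h" by (simp add: power2_eq_square)
    thus ?thesis unfolding r2g_def R_def[symmetric] using h0 by (simp add: field_simps)
  qed
qed

context cfg begin

lemma caseB2: assumes c4: "4*c \<le> h^2"
  shows "b \<ge> Mx c h \<Longrightarrow> NoGapY (Ys c h b)" and "b < Mx c h \<Longrightarrow> \<exists>a1 a2. GapY (Ys c h b) a1 a2"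
proof -
  have cB: "c < h^2"
  proof -
    have "h^2 > 0" using h0 by simp
    thus ?thesis using c4 c0 by linarith
  qed
  define r2 where "r2 = r2g c h"
  have R: "\<And>x. rho c h x = 3*h*(x - r1g c h)*(x - r2)" "r1g c h \<le> sqrt c" "sqrt c \<le> r2" "r2 \<le> h" "r2 > 0"
    "r1g c h \<le> r2"
    using B2_roots[OF h0 c0 c4] unfolding r2_def by auto
  have Mxd: "Mx c h = phi c h r2" unfolding Mx_def r2_def by simp
  have sch: "sqrt c < h" using sqc_lt_h[OF cB] .
  have sch2: "2* sqrt c \<le> h"
  proof -
    have "sqrt (4*c) \<le> sqrt (h^2)" using c4 by (intro real_sqrt_le_mono)
    thus ?thesis using h0 by (simp add: real_sqrt_mult)
  qed
  have tsp: "ts > h" "ts > sqrt c" "ts > 0" "phi c h ts = 0" "inY c h b ts" using B_ts[OF cB] by auto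
  have r2ts: "r2 < ts" using R tsp by simp
  have bnd1: "\<And>t. t > 0 \<Longrightarrow> t \<ge> sqrt c \<Longrightarrow> phi c h t < b \<Longrightarrow> inY c h b t" using B_bnd(1)[OF cB] by blast
  have bnd2: "\<And>t. t > 0 \<Longrightarrow> t \<ge> sqrt c \<Longrightarrow> inY c h b t \<Longrightarrow> phi c h t \<le> b" using B_bnd(2)[OF cB] by blast
  have int: "\<And>t. 0 < t \<Longrightarrow> t < sqrt c \<Longrightarrow> inY c h b t \<longleftrightarrow> PP h t \<le> b" using B_int[OF cB] by blast
  have Ypos: "\<And>t. inY c h b t \<Longrightarrow> t > 0" unfolding inY_def by simp
  have S2: "\<And>t1 t2. sqrt c \<le> t1 \<Longrightarrow> t1 < t2 \<Longrightarrow> t2 \<le> r2 \<Longrightarrow> t1 > 0 \<Longrightarrow> phi c h t1 < phi c h t2"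
  proof -
    fix t1 t2 assume t: "sqrt c \<le> t1" "t1 < t2" "t2 \<le> r2" "t1 > 0"
    show "phi c h t1 < phi c h t2"
    proof (rule phi_inc[OF t(2) _ h0])
      show "h*t1 - c > 0" using B_pos[OF cB, of t1] t by simp
      fix x assume x: "t1 < x" "x < t2"
      have "kk c h x < 0" using B_kk_neg[OF cB, of x] x t r2ts by simp
      moreover have "rho c h x < 0"
      proof -
        have "x - r1g c h > 0" "x - r2 < 0" using x t R by simp_all
        hence "(x - r1g c h)*(x - r2) < 0" by (simp add: mult_pos_neg)
        thus ?thesis unfolding R(1) using h0 by (simp add: mult.assoc mult_pos_neg)
      qed
      ultimately show "kk c h x * rho c h x > 0" by (simp add: mult_neg_neg)
    qed
  qed
  have rpos: "\<And>x. x > r2 \<Longrightarrow> rho c h x > 0"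
  proof -
    fix x assume x: "x > r2"
    have "x - r1g c h > 0" "x - r2 > 0" using x R by simp_all
    hence "(x - r1g c h)*(x - r2) > 0" by simp
    thus "rho c h x > 0" unfolding R(1) using h0 by (simp add: mult.assoc)
  qed
  have S3: "\<And>t1 t2. r2 \<le> t1 \<Longrightarrow> t1 < t2 \<Longrightarrow> t2 \<le> ts \<Longrightarrow> phi c h t2 < phi c h t1"
  proof -
    fix t1 t2 assume t: "r2 \<le> t1" "t1 < t2" "t2 \<le> ts"
    show "phi c h t2 < phi c h t1"
    proof (rule phi_dec[OF t(2) _ h0])
      show "h*t1 - c > 0" using B_pos[OF cB, of t1] t R by simp
      fix x assume x: "t1 < x" "x < t2"
      have "kk c h x < 0" using B_kk_neg[OF cB, of x] x t R by simp
      moreover have "rho c h x > 0" using rpos x t by simp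
      ultimately show "kk c h x * rho c h x < 0" by (simp add: mult_neg_pos)
    qed
  qed
  have S4: "\<And>t1 t2. ts \<le> t1 \<Longrightarrow> t1 < t2 \<Longrightarrow> phi c h t1 < phi c h t2"
  proof -
    fix t1 t2 assume t: "ts \<le> t1" "t1 < t2"
    have "\<And>x. x > ts \<Longrightarrow> rho c h x > 0" using rpos r2ts by simp
    thus "phi c h t1 < phi c h t2" using B_S4[OF cB _ t] by blast
  qed
  have Ple: "\<And>t'. 0 < t' \<Longrightarrow> t' < sqrt c \<Longrightarrow> PP h t' < phi c h (sqrt c)"
  proof -
    fix t' assume t': "0 < t'" "t' < sqrt c"
    have cp: "c > 0" using t' by (smt (verit) real_sqrt_le_0_iff)
    have "PP h t' < PP h (sqrt c)" using P_inc[of t' "sqrt c" h] t' sch2 by simp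
    thus "PP h t' < phi c h (sqrt c)" using B_phi_P[OF cB cp] by simp
  qed
  have phc: "\<And>t. c > 0 \<Longrightarrow> sqrt c \<le> t \<Longrightarrow> t \<le> r2 \<Longrightarrow> phi c h (sqrt c) \<le> phi c h t"
  proof -
    fix t assume t: "c > 0" "sqrt c \<le> t" "t \<le> r2"
    show "phi c h (sqrt c) \<le> phi c h t"
    proof (cases "sqrt c = t")
      case False
      hence "sqrt c < t" using t by simp
      moreover have "sqrt c > 0" using t by simp
      ultimately show ?thesis using S2[of "sqrt c" t] t by simp
    qed simp
  qed
  have rts: "\<And>x. r2 < x \<Longrightarrow> x \<le> ts \<Longrightarrow> phi c h x < Mx c h" using S3[of r2] Mxd by simp
  have right_gen: "\<And>t1 t2 t'. inY c h b t1 \<Longrightarrow> inY c h b t2 \<Longrightarrow> r2 < t1 \<Longrightarrow> t1 < t' \<Longrightarrow> t' < t2 \<Longrightarrow> inY c h b t'"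
  proof -
    fix t1 t2 t' assume a: "inY c h b t1" "inY c h b t2" "r2 < t1" "t1 < t'" "t' < t2"
    have c1: "t1 \<ge> sqrt c" "t1 > 0" using a R by simp_all
    have c': "t' \<ge> sqrt c" "t' > 0" using a R by simp_all
    show "inY c h b t'"
    proof (cases "t' \<le> ts")
      case True
      have "phi c h t' < phi c h t1" using S3[of t1 t'] a True by simp
      also have "\<dots> \<le> b" using bnd2[OF c1(2) c1(1) a(1)] .
      finally show ?thesis using bnd1[OF c'(2) c'(1)] by simp
    next
      case False
      have "phi c h t' < phi c h t2" using S4[of t' t2] a False by simp
      also have "\<dots> \<le> b" using bnd2[of t2] a(2) c' a by simp
      finally show ?thesis using bnd1[OF c'(2) c'(1)] by simp
    qed
  qed
  show "b \<ge> Mx c h \<Longrightarrow> NoGapY (Ys c h b)"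
  proof -
    assume bM: "b \<ge> Mx c h"
    have mid: "\<And>x. r2 < x \<Longrightarrow> x \<le> ts \<Longrightarrow> inY c h b x"
    proof -
      fix x assume x: "r2 < x" "x \<le> ts"
      have "phi c h x < b" using rts[OF x] bM by simp
      thus "inY c h b x" using bnd1[of x] x R by simp
    qed
    show ?thesis unfolding NoGapY_def
    proof (intro ballI allI impI)
      fix t t' assume t: "t \<in> Ys c h b" and t': "0 < t' \<and> t' < t"
      have tY: "inY c h b t" using t unfolding Ys_def by simp
      show "t' \<in> closure (Ys c h b)"
      proof (cases "t' < sqrt c")
        case True
        have cp: "c > 0" using True t' by (smt (verit) real_sqrt_le_0_iff)
        have "PP h t' < phi c h (sqrt c)" using Ple t' True by simp
        also have "\<dots> \<le> Mx c h" using phc[OF cp R(3) order_refl] Mxd by simp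
        finally have "inY c h b t'" using int[of t'] t' True bM by simp
        thus ?thesis by (rule inY_cl)
      next
        case False
        hence t'c: "t' \<ge> sqrt c" by simp
        show ?thesis
        proof (cases "t' < r2")
          case True
          have "phi c h t' < Mx c h" using S2[of t' r2] t'c True t' Mxd by simp
          hence "inY c h b t'" using bnd1[of t'] t'c t' bM by simp
          thus ?thesis by (rule inY_cl)
        next
          case False
          show ?thesis
          proof (cases "t' = r2")
            case True
            have "{r2<..<ts} \<subseteq> Ys c h b" using mid unfolding Ys_def by auto
            thus ?thesis using closure_left_end[of r2 ts] r2ts True by simp
          next
            case False
            hence t'r: "t' > r2" using \<open>\<not> t' < r2\<close> by simp
            show ?thesis
            proof (cases "t' \<le> ts")
              case True thus ?thesis using mid[OF t'r] inY_cl by blast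
            next
              case False
              have "phi c h t' < phi c h t" using S4[of t' t] False t' by simp
              also have "\<dots> \<le> b" using bnd2[of t] tY t' t'c by simp
              finally have "inY c h b t'" using bnd1[of t'] t' t'c by simp
              thus ?thesis by (rule inY_cl)
            qed
          qed
        qed
      qed
    qed
  qed
  show "b < Mx c h \<Longrightarrow> \<exists>a1 a2. GapY (Ys c h b) a1 a2"
  proof -
    assume bM: "b < Mx c h"
    have pr2: "h*r2 - c > 0" using B_pos[OF cB, of r2] R by simp
    obtain e1 where e1: "e1 > 0" "\<forall>y. \<bar>y - r2\<bar> < e1 \<longrightarrow> phi c h y > b"
      using cont_nbhd[OF phi_isCont[of h r2 c]] pr2 bM Mxd by force
    have "\<exists>e>0. \<forall>t. inY c h b t \<longrightarrow> \<not> \<bar>t - r2\<bar> < e"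
    proof (cases "sqrt c < r2")
      case True
      define e where "e = min e1 (r2 - sqrt c)"
      have "e > 0" unfolding e_def using e1 True by simp
      moreover have "\<forall>t. inY c h b t \<longrightarrow> \<not> \<bar>t - r2\<bar> < e"
      proof (intro allI impI notI)
        fix t assume t: "inY c h b t" "\<bar>t - r2\<bar> < e"
        have "e \<le> e1" "e \<le> r2 - sqrt c" unfolding e_def by auto
        hence a: "\<bar>t - r2\<bar> < e1" "t > sqrt c" using t(2) unfolding abs_less_iff by linarith+
        have "phi c h t \<le> b" using bnd2[of t] t Ypos a by simp
        thus False using e1 a by force
      qed
      ultimately show ?thesis by blast
    next
      case False
      hence eq: "sqrt c = r2" using R by simp
      hence "sqrt c > 0" using R by simp
      hence cp: "c > 0" by simp
      have "PP h (sqrt c) > b" using B_phi_P[OF cB cp] eq Mxd bM by simp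
      then obtain e2 where e2: "e2 > 0" "\<forall>y. \<bar>y - sqrt c\<bar> < e2 \<longrightarrow> PP h y > b"
        using cont_nbhd[OF P_isCont] by blast
      define e where "e = min e1 e2"
      have "e > 0" unfolding e_def using e1 e2 by simp
      moreover have "\<forall>t. inY c h b t \<longrightarrow> \<not> \<bar>t - r2\<bar> < e"
      proof (intro allI impI notI)
        fix t assume t: "inY c h b t" "\<bar>t - r2\<bar> < e"
        have "e \<le> e1" "e \<le> e2" unfolding e_def by auto
        hence a: "\<bar>t - r2\<bar> < e1" "\<bar>t - sqrt c\<bar> < e2" using t(2) eq by linarith+
        show False
        proof (cases "t < sqrt c")
          case True
          have "PP h t \<le> b" using int[of t] t Ypos True by simp
          thus False using e2 a by force
        next
          case False
          have "phi c h t \<le> b" using bnd2[of t] t Ypos False by simp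
          thus False using e1 a by force
        qed
      qed
      ultimately show ?thesis by blast
    qed
    then obtain e where e: "e > 0" "\<forall>t. inY c h b t \<longrightarrow> \<not> \<bar>t - r2\<bar> < e" by blast
    show ?thesis
    proof (rule gap_from_g[OF Ys_pos e(1), of r2])
      show "\<forall>t\<in>Ys c h b. e \<le> \<bar>t - r2\<bar>" using e(2) unfolding Ys_def by (auto simp: not_less)
      show "\<exists>t\<in>Ys c h b. t < r2" using small_pt R by simp
      show "\<exists>t\<in>Ys c h b. t > r2" using tsp r2ts unfolding Ys_def by (intro bexI[of _ ts]) auto
      show "\<forall>t\<in>Ys c h b. t < r2 \<longrightarrow> (\<forall>t'. 0 < t' \<and> t' < t \<longrightarrow> t' \<in> closure (Ys c h b))"
      proof (intro ballI impI allI)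
        fix t t' assume t: "t \<in> Ys c h b" "t < r2" and t': "0 < t' \<and> t' < t"
        have tY: "inY c h b t" using t unfolding Ys_def by simp
        have tp: "t > 0" using Ypos[OF tY] .
        have "inY c h b t'"
        proof (cases "t < sqrt c")
          case True
          have "PP h t \<le> b" using int[of t] tY tp True by simp
          moreover have "PP h t' < PP h t" using P_inc[of t' t h] t' True sch2 by simp
          ultimately show ?thesis using int[of t'] t' True by simp
        next
          case False
          hence tc: "t \<ge> sqrt c" by simp
          have pb: "phi c h t \<le> b" using bnd2[of t] tY tp tc by simp
          show ?thesis
          proof (cases "t' < sqrt c")
            case True
            have cp: "c > 0" using True t' by (smt (verit) real_sqrt_le_0_iff)
            have "PP h t' < phi c h (sqrt c)" using Ple t' True by simp
            also have "\<dots> \<le> phi c h t" using phc[OF cp tc] t by simp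
            finally show ?thesis using int[of t'] t' True pb by simp
          next
            case False
            have "phi c h t' < phi c h t" using S2[of t' t] False t' t by simp
            thus ?thesis using bnd1[of t'] False t' pb by simp
          qed
        qed
        thus "t' \<in> closure (Ys c h b)" by (rule inY_cl)
      qed
      show "\<forall>t1\<in>Ys c h b. \<forall>t2\<in>Ys c h b. r2 < t1 \<longrightarrow> t1 < t2 \<longrightarrow> (\<forall>t'. t1 < t' \<and> t' < t2 \<longrightarrow> t' \<in> closure (Ys c h b))"
      proof (intro ballI impI allI)
        fix t1 t2 t' assume t1: "t1 \<in> Ys c h b" "r2 < t1" and t12: "t1 < t2" and t2: "t2 \<in> Ys c h b"
          and t': "t1 < t' \<and> t' < t2"
        have "inY c h b t'" using right_gen[of t1 t2 t'] t1 t2 t' unfolding Ys_def by simp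
        thus "t' \<in> closure (Ys c h b)" by (rule inY_cl)
      qed
    qed
  qed
qed

end

lemma core_id:
  fixes x y al be c h :: real
  shows "((al - (x^2 - y^2))*(c + 2*h*y - x^2 + y^2) + (2*x*y)*(-2*h*x - 2*x*y) - be*(x^2 - y^2))*(-2*h*x - 2*x*y)
       - ((al - (x^2 - y^2))*(-2*h*x - 2*x*y) - (2*x*y)*(c + 2*h*y - x^2 + y^2) - be*(2*x*y))*(c + 2*h*y - x^2 + y^2)
       = -2*x*curveF c h be (x^2) (-y)"
  unfolding curveF_def kk_def by algebra

lemma pab_re: "Re (pab c d al be (Complex x y)) =
   (al - (x^2 - y^2))*(c + d*y - x^2 + y^2) + (2*x*y)*(-d*x - 2*x*y) - be*(x^2 - y^2)"
  unfolding pab_def by (simp add: power2_eq_square algebra_simps)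

lemma pab_im: "Im (pab c d al be (Complex x y)) =
   (al - (x^2 - y^2))*(-d*x - 2*x*y) - (2*x*y)*(c + d*y - x^2 + y^2) - be*(2*x*y)"
  unfolding pab_def by (simp add: power2_eq_square algebra_simps)

lemma Q_re: "Re (complex_of_real c - \<i> * complex_of_real d * Complex x y - (Complex x y)^2) = c + d*y - x^2 + y^2"
  by (simp add: power2_eq_square algebra_simps)

lemma Q_im: "Im (complex_of_real c - \<i> * complex_of_real d * Complex x y - (Complex x y)^2) = -d*x - 2*x*y"
  by (simp add: power2_eq_square algebra_simps)

definition Qf :: "real \<Rightarrow> real \<Rightarrow> complex \<Rightarrow> complex" where
  "Qf c d w = complex_of_real c - \<i> * complex_of_real d * w - w^2"

lemma Qf_sq: "Qf c d w = (csqrt (complex_of_real (c - d^2/4)))^2 - (w + \<i> * complex_of_real (d/2))^2"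
proof -
  have "(csqrt (complex_of_real (c - d^2/4)))^2 = complex_of_real c - (complex_of_real d)^2/4"
    by (simp add: power2_csqrt)
  moreover have "(w + \<i> * complex_of_real (d/2))^2 = w^2 + \<i> * complex_of_real d * w - (complex_of_real d)^2/4"
    by (simp add: power2_eq_square field_simps)
  ultimately show ?thesis unfolding Qf_def by simp
qed

lemma Qf_delta: "Qf c d (delta_p c d) = 0" "Qf c d (delta_m c d) = 0"
proof -
  have e: "\<i> * complex_of_real (d/2) = complex_of_real (d/2) * \<i>" by simp
  show "Qf c d (delta_p c d) = 0" unfolding Qf_sq delta_p_def by (simp add: e)
  show "Qf c d (delta_m c d) = 0" unfolding Qf_sq delta_m_def by (simp add: e power2_eq_square)
qed

lemma Qf_zero: assumes "Qf c d w = 0" shows "w = delta_p c d \<or> w = delta_m c d"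
proof -
  define r where "r = csqrt (complex_of_real (c - d^2/4))"
  define z where "z = w + \<i> * complex_of_real (d/2)"
  have "r^2 - z^2 = 0" using assms unfolding Qf_sq r_def z_def .
  hence "(z - r)*(z + r) = 0" by (simp add: power2_eq_square algebra_simps)
  hence "z = r \<or> z = -r" by (simp add: eq_neg_iff_add_eq_0)
  thus ?thesis unfolding z_def r_def delta_p_def delta_m_def by (auto simp: algebra_simps)
qed

lemma Qf_comp: "Re (Qf c d (Complex x y)) = c + d*y - x^2 + y^2" "Im (Qf c d (Complex x y)) = -d*x - 2*x*y"
  unfolding Qf_def using Q_re Q_im by auto

lemma W_char: assumes x: "Re w \<noteq> 0"
  shows "w \<in> W_beta c d be \<longleftrightarrow> curveF c (d/2) be ((Re w)^2) (-Im w) = 0"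
proof -
  define x where "x = Re w"
  define y where "y = Im w"
  define h where "h = d/2"
  have dh: "d = 2*h" unfolding h_def by simp
  have w: "w = Complex x y" unfolding x_def y_def by simp
  have x0: "x \<noteq> 0" using x unfolding x_def .
  define A where "A = c + d*y - x^2 + y^2"
  define B where "B = -d*x - 2*x*y"
  define F where "F = curveF c h be (x^2) (-y)"
  have core: "\<And>al. Re (pab c d al be w) * B - Im (pab c d al be w) * A = -2*x*F"
    unfolding w pab_re pab_im A_def B_def F_def dh using core_id by simp
  have QA: "Re (Qf c d w) = A" "Im (Qf c d w) = B" unfolding w A_def B_def using Qf_comp by auto
  have delF: "A = 0 \<Longrightarrow> B = 0 \<Longrightarrow> F = 0"
  proof -
    assume a: "A = 0" "B = 0"
    have "x*(d + 2*y) = 0" using a(2) unfolding B_def by (simp add: algebra_simps)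
    hence "d + 2*y = 0" using x0 by simp
    hence yh: "y = -h" using dh by linarith
    hence "x^2 = c - h^2" using a(1) unfolding A_def dh by (simp add: power2_eq_square algebra_simps)
    thus "F = 0" unfolding F_def curveF_def kk_def yh by (simp add: power2_eq_square algebra_simps)
  qed
  show ?thesis
  proof
    assume "w \<in> W_beta c d be"
    hence "(\<exists>al. pab c d al be w = 0) \<or> w = delta_p c d \<or> w = delta_m c d" unfolding W_beta_def by auto
    thus "curveF c (d/2) be ((Re w)^2) (-Im w) = 0"
    proof (elim disjE exE)
      fix al assume "pab c d al be w = 0"
      hence "-2*x*F = 0" using core[of al] by simp
      thus ?thesis using x0 unfolding F_def x_def y_def h_def by simp
    next
      assume "w = delta_p c d"
      hence "Qf c d w = 0" using Qf_delta by simp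
      hence "A = 0" "B = 0" using QA by (auto simp: complex_eq_iff)
      thus ?thesis using delF unfolding F_def x_def y_def h_def by simp
    next
      assume "w = delta_m c d"
      hence "Qf c d w = 0" using Qf_delta by simp
      hence "A = 0" "B = 0" using QA by (auto simp: complex_eq_iff)
      thus ?thesis using delF unfolding F_def x_def y_def h_def by simp
    qed
  next
    assume "curveF c (d/2) be ((Re w)^2) (-Im w) = 0"
    hence F0: "F = 0" unfolding F_def x_def y_def h_def .
    show "w \<in> W_beta c d be"
    proof (cases "A = 0")
      case False
      define al where "al = (x^2 - y^2) - ((2*x*y)*B - be*(x^2 - y^2))/A"
      have re: "Re (pab c d al be w) = 0" unfolding w pab_re al_def using False
        unfolding A_def B_def by (simp add: field_simps)
      have "Im (pab c d al be w) * A = 0" using core[of al] re F0 by simp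
      hence "Im (pab c d al be w) = 0" using False by simp
      hence "pab c d al be w = 0" using re by (simp add: complex_eq_iff)
      thus ?thesis unfolding W_beta_def by blast
    next
      case True
      show ?thesis
      proof (cases "B = 0")
        case False
        define al where "al = (x^2 - y^2) + ((2*x*y)*A + be*(2*x*y))/B"
        have im: "Im (pab c d al be w) = 0" unfolding w pab_im al_def using False
          unfolding A_def B_def by (simp add: field_simps)
        have "Re (pab c d al be w) * B = 0" using core[of al] im F0 by simp
        hence "Re (pab c d al be w) = 0" using False by simp
        hence "pab c d al be w = 0" using im by (simp add: complex_eq_iff)
        thus ?thesis unfolding W_beta_def by blast
      next
        case True
        hence "Qf c d w = 0" using \<open>A = 0\<close> QA by (simp add: complex_eq_iff)
        thus ?thesis using Qf_zero unfolding W_beta_def by blast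
      qed
    qed
  qed
qed

lemma quad_bound: fixes s a b :: real
  assumes "s \<ge> 0" "a \<ge> 0" "b \<ge> 0" "s^2 \<le> a* s + b" shows "s \<le> a + b + 1"
proof (rule ccontr)
  assume "\<not> s \<le> a + b + 1"
  hence s: "s > a + b + 1" by simp
  have "s* s > (a + b + 1)* s" using s assms by (intro mult_strict_right_mono) auto
  moreover have "b* s \<ge> b*1" using s assms by (intro mult_left_mono) auto
  moreover have "(a + b + 1)* s = a* s + b* s + s" by algebra
  ultimately have "s* s > a* s + b" using assms(1) by linarith
  hence "s^2 > a* s + b" by (simp add: power2_eq_square)
  thus False using assms by simp
qed

definition Sset :: "real \<Rightarrow> real \<Rightarrow> real \<Rightarrow> complex set" where
  "Sset c d be = {w \<in> W_beta c d be. Re w \<noteq> 0}"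

lemma Gamma_Sset: "Gamma_beta c d be = closure (Sset c d be)"
  unfolding Gamma_beta_def Sset_def by simp

context cfg begin

lemma curve_t_pos: assumes s: "s > 0" and F: "curveF c h b s t = 0" shows "t > 0"
proof (rule ccontr)
  assume "\<not> t > 0" hence t: "t \<le> 0" by simp
  have "t*((kk c h t - s)^2 + 4* s*(t-h)^2) \<le> 0" using t s by (simp add: mult_nonpos_nonneg)
  moreover have "b*c*t \<le> 0" using t b0 c0 by (simp add: mult_nonneg_nonpos)
  moreover have "b*h*(s + t^2) > 0" using s b0 h0 by (simp add: add_pos_nonneg)
  ultimately have "curveF c h b s t < 0" unfolding curveF_def by linarith
  thus False using F by simp
qed

lemma s_bound: assumes t1: "t1 > 0" "t1 \<le> t" and s: "s > 0" and F: "curveF c h b s t = 0"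
  shows "s \<le> 2*b*h/t1 + (2*b*h*T0^2/t1 + 2*(T0^2 + 2*h*T0 + c)^2) + 1"
proof -
  have tp: "t > 0" using t1 by simp
  have tY: "inY c h b t" unfolding inY_def using tp s F by blast
  have tT: "t < T0" using bound[OF tY] .
  define k where "k = kk c h t"
  have e: "t*((k - s)^2 + 4* s*(t-h)^2) = b*(h* s + t*(h*t-c))" using F F_sigma unfolding k_def by simp
  have "t1*(k-s)^2 \<le> t*(k-s)^2" using t1 by (intro mult_right_mono) auto
  also have "\<dots> \<le> t*((k - s)^2 + 4* s*(t-h)^2)" using tp s by (intro mult_left_mono) auto
  also have "\<dots> = b*h* s + b*h*t^2 - b*t*c" unfolding e by (simp add: algebra_simps power2_eq_square)
  also have "\<dots> \<le> b*h* s + b*h*T0^2"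
  proof -
    have "t^2 \<le> T0^2" using tp tT by (intro power_mono) auto
    hence "b*h*t^2 \<le> b*h*T0^2" using b0 h0 by (intro mult_left_mono) auto
    moreover have "b*t*c \<ge> 0" using b0 tp c0 by simp
    ultimately show ?thesis by linarith
  qed
  finally have ks: "t1*(k-s)^2 \<le> b*h* s + b*h*T0^2" .
  hence ks': "(k-s)^2 \<le> (b*h* s + b*h*T0^2)/t1" using t1 by (simp add: field_simps)
  define K0 where "K0 = T0^2 + 2*h*T0 + c"
  have kb: "\<bar>k\<bar> \<le> K0"
  proof -
    have "\<bar>k\<bar> \<le> t^2 + 2*h*t + c" unfolding k_def kk_def using tp h0 c0 by (simp add: abs_le_iff)
    moreover have "t^2 \<le> T0^2" using tp tT by (intro power_mono) auto
    moreover have "2*h*t \<le> 2*h*T0" using tT h0 by simp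
    ultimately show ?thesis unfolding K0_def by linarith
  qed
  have "\<bar>k\<bar>^2 \<le> K0^2" using power_mono[OF kb abs_ge_zero] .
  hence "k^2 \<le> K0^2" by simp
  have "s^2 \<le> 2*(k-s)^2 + 2*k^2"
  proof -
    have "2*(k-s)^2 + 2*k^2 - s^2 = (2*k - s)^2" by algebra
    thus ?thesis by (smt (verit) zero_le_power2)
  qed
  also have "\<dots> \<le> 2*((b*h* s + b*h*T0^2)/t1) + 2*K0^2" using ks' \<open>k^2 \<le> K0^2\<close> by (intro add_mono mult_left_mono) auto
  also have "\<dots> = (2*b*h/t1)* s + (2*b*h*T0^2/t1 + 2*K0^2)" using t1(1) by (simp add: field_simps)
  finally have "s^2 \<le> (2*b*h/t1)* s + (2*b*h*T0^2/t1 + 2*K0^2)" .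
  moreover have "2*b*h/t1 \<ge> 0" "2*b*h*T0^2/t1 + 2*K0^2 \<ge> 0" using b0 h0 t1 by simp_all
  ultimately show ?thesis using quad_bound[of s] s unfolding K0_def by simp
qed

end

lemma S_char: assumes c0: "c \<ge> 0" and d0: "d > 0" and b0: "be > 0"
  shows "w \<in> Sset c d be \<longleftrightarrow> Re w \<noteq> 0 \<and> curveF c (d/2) be ((Re w)^2) (-Im w) = 0"
  unfolding Sset_def using W_char by auto

lemma S_inY: assumes c0: "c \<ge> 0" and d0: "d > 0" and b0: "be > 0" and w: "w \<in> Sset c d be"
  shows "inY c (d/2) be (-Im w)"
proof -
  interpret cfg c "d/2" be using c0 d0 b0 by unfold_locales auto
  have a: "Re w \<noteq> 0" "curveF c (d/2) be ((Re w)^2) (-Im w) = 0" using S_char[OF c0 d0 b0] w by auto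
  have s: "(Re w)^2 > 0" using a by simp
  have "-Im w > 0" using curve_t_pos[OF s a(2)] .
  thus ?thesis unfolding inY_def using s a(2) by blast
qed

lemma F1: assumes c0: "c \<ge> 0" and d0: "d > 0" and b0: "be > 0"
  shows "\<forall>w\<in>Gamma_beta c d be. - Im w \<in> closure (Ys c (d/2) be)"
proof -
  have cl: "closed ((\<lambda>w. - Im w) -` closure (Ys c (d/2) be))"
    by (rule continuous_closed_vimage) (auto intro!: continuous_intros)
  have "Sset c d be \<subseteq> (\<lambda>w. - Im w) -` closure (Ys c (d/2) be)"
  proof
    fix w assume "w \<in> Sset c d be"
    hence "inY c (d/2) be (-Im w)" using S_inY[OF c0 d0 b0] by blast
    hence "-Im w \<in> closure (Ys c (d/2) be)" by (rule inY_cl)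
    thus "w \<in> (\<lambda>w. - Im w) -` closure (Ys c (d/2) be)" by simp
  qed
  hence "closure (Sset c d be) \<subseteq> (\<lambda>w. - Im w) -` closure (Ys c (d/2) be)" using cl closure_minimal by blast
  thus ?thesis unfolding Gamma_Sset by auto
qed

lemma F2: assumes c0: "c \<ge> 0" and d0: "d > 0" and b0: "be > 0"
  shows "\<forall>t\<in>closure (Ys c (d/2) be). t > 0 \<longrightarrow> (\<exists>w\<in>Gamma_beta c d be. Im w = -t)"
proof (intro ballI impI)
  interpret cfg c "d/2" be using c0 d0 b0 by unfold_locales auto
  fix t0 assume t0Y: "t0 \<in> closure (Ys c (d/2) be)" and t0: "t0 > 0"
  define h where "h = d/2"
  define t1 where "t1 = t0/2"
  have t1p: "t1 > 0" unfolding t1_def using t0 by simp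
  define Rb where "Rb = 2*be*h/t1 + (2*be*h*T0^2/t1 + 2*(T0^2 + 2*h*T0 + c)^2) + 1"
  define Bd where "Bd = Rb + T0^2 + 1"
  define K where "K = closure (Sset c d be) \<inter> cball 0 Bd \<inter> {w. Im w \<le> -t1}"
  have Kc: "compact K"
  proof -
    have "closed {w::complex. Im w \<le> -t1}"
      using closed_halfspace_Im_le[of "-t1"] by (simp add: Collect_mono)
    hence "closed (closure (Sset c d be) \<inter> {w. Im w \<le> -t1})" by auto
    hence "compact (cball 0 Bd \<inter> (closure (Sset c d be) \<inter> {w. Im w \<le> -t1}))"
      by (intro compact_Int_closed) auto
    thus ?thesis unfolding K_def by (simp add: Int_ac)
  qed
  have fK: "compact ((\<lambda>w. - Im w) ` K)" using Kc by (intro compact_continuous_image) (auto intro!: continuous_intros)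
  hence fKc: "closed ((\<lambda>w. - Im w) ` K)" by (rule compact_imp_closed)
  have sub: "{t1<..} \<inter> Ys c (d/2) be \<subseteq> (\<lambda>w. - Im w) ` K"
  proof
    fix t assume "t \<in> {t1<..} \<inter> Ys c (d/2) be"
    hence t: "t > t1" "inY c (d/2) be t" unfolding Ys_def by auto
    then obtain s where s: "s > 0" "curveF c (d/2) be s t = 0" unfolding inY_def by blast
    have sb: "s \<le> Rb" using s_bound[of t1 t s] t1p t s unfolding Rb_def h_def by simp
    have tT: "t < T0" using bound t(2) by simp
    define w where "w = Complex (sqrt s) (-t)"
    have rw: "Re w = sqrt s" "Im w = -t" unfolding w_def by auto
    have "w \<in> Sset c d be" unfolding S_char[OF c0 d0 b0] rw using s by simp
    moreover have "norm w \<le> Bd"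
    proof -
      have tp: "t > 0" using t t1p by simp
      have "(norm w)^2 = s + t^2" unfolding w_def cmod_def using s by simp
      also have "\<dots> \<le> Rb + T0^2" using sb tT tp by (intro add_mono power_mono) auto
      also have "\<dots> \<le> Bd" unfolding Bd_def by simp
      finally have n2: "(norm w)^2 \<le> Bd" .
      have hp: "h > 0" unfolding h_def using d0 by simp
      have "2*be*h/t1 \<ge> 0" "2*be*h*T0^2/t1 \<ge> 0" "2*(T0^2 + 2*h*T0 + c)^2 \<ge> 0" "T0^2 \<ge> 0"
        using b0 t1p hp by simp_all
      hence "Bd \<ge> 1" unfolding Bd_def Rb_def by linarith
      hence "Bd \<le> Bd^2" by (simp add: power2_eq_square)
      hence "(norm w)^2 \<le> Bd^2" using n2 by simp
      thus ?thesis using power2_le_imp_le[of "norm w" Bd] \<open>Bd \<ge> 1\<close> by simp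
    qed
    moreover have "Im w \<le> -t1" using rw t by simp
    ultimately have "w \<in> K" unfolding K_def using closure_subset[of "Sset c d be"] by (auto simp: dist_norm)
    thus "t \<in> (\<lambda>w. - Im w) ` K" using rw by force
  qed
  have "t0 \<in> {t1<..} \<inter> closure (Ys c (d/2) be)" using t0Y t0 unfolding t1_def by (simp add: field_simps)
  hence "t0 \<in> closure ({t1<..} \<inter> Ys c (d/2) be)" using open_Int_closure_subset[of "{t1<..}" "Ys c (d/2) be"] by auto
  hence "t0 \<in> closure ((\<lambda>w. - Im w) ` K)" using closure_mono[OF sub] by blast
  hence "t0 \<in> (\<lambda>w. - Im w) ` K" using fKc by (simp add: closure_closed)
  then obtain w where "w \<in> K" "t0 = - Im w" by blast
  thus "\<exists>w\<in>Gamma_beta c d be. Im w = -t0" unfolding K_def Gamma_Sset by auto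
qed

context cfg begin

lemma B2_shape: assumes c4: "4*c \<le> h^2"
  shows "\<And>t1 t2. sqrt c \<le> t1 \<Longrightarrow> t1 < t2 \<Longrightarrow> t2 \<le> r2g c h \<Longrightarrow> t1 > 0 \<Longrightarrow> phi c h t1 < phi c h t2"
    and "\<And>t1 t2. r2g c h \<le> t1 \<Longrightarrow> t1 < t2 \<Longrightarrow> t2 \<le> ts \<Longrightarrow> phi c h t2 < phi c h t1"
    and "r2g c h < ts"
proof -
  have cB: "c < h^2"
  proof -
    have "h^2 > 0" using h0 by simp
    thus ?thesis using c4 c0 by linarith
  qed
  define r2 where "r2 = r2g c h"
  have R: "\<And>x. rho c h x = 3*h*(x - r1g c h)*(x - r2)" "r1g c h \<le> sqrt c" "sqrt c \<le> r2" "r2 \<le> h" "r2 > 0"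
    "r1g c h \<le> r2"
    using B2_roots[OF h0 c0 c4] unfolding r2_def by auto
  have tsp: "ts > h" using B_ts[OF cB] by auto
  show r2ts: "r2g c h < ts" using R tsp unfolding r2_def by simp
  show "\<And>t1 t2. sqrt c \<le> t1 \<Longrightarrow> t1 < t2 \<Longrightarrow> t2 \<le> r2g c h \<Longrightarrow> t1 > 0 \<Longrightarrow> phi c h t1 < phi c h t2"
  proof -
    fix t1 t2 assume t: "sqrt c \<le> t1" "t1 < t2" "t2 \<le> r2g c h" "t1 > 0"
    show "phi c h t1 < phi c h t2"
    proof (rule phi_inc[OF t(2) _ h0])
      show "h*t1 - c > 0" using B_pos[OF cB, of t1] t by simp
      fix x assume x: "t1 < x" "x < t2"
      have "kk c h x < 0" using B_kk_neg[OF cB, of x] x t r2ts by simp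
      moreover have "rho c h x < 0"
      proof -
        have "x - r1g c h > 0" "x - r2 < 0" using x t R unfolding r2_def by simp_all
        hence "(x - r1g c h)*(x - r2) < 0" by (simp add: mult_pos_neg)
        thus ?thesis unfolding R(1) using h0 by (simp add: mult.assoc mult_pos_neg)
      qed
      ultimately show "kk c h x * rho c h x > 0" by (simp add: mult_neg_neg)
    qed
  qed
  show "\<And>t1 t2. r2g c h \<le> t1 \<Longrightarrow> t1 < t2 \<Longrightarrow> t2 \<le> ts \<Longrightarrow> phi c h t2 < phi c h t1"
  proof -
    fix t1 t2 assume t: "r2g c h \<le> t1" "t1 < t2" "t2 \<le> ts"
    show "phi c h t2 < phi c h t1"
    proof (rule phi_dec[OF t(2) _ h0])
      show "h*t1 - c > 0" using B_pos[OF cB, of t1] t R unfolding r2_def by simp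
      fix x assume x: "t1 < x" "x < t2"
      have "kk c h x < 0" using B_kk_neg[OF cB, of x] x t R unfolding r2_def by simp
      moreover have "rho c h x > 0"
      proof -
        have "x - r1g c h > 0" "x - r2 > 0" using x t R unfolding r2_def by simp_all
        hence "(x - r1g c h)*(x - r2) > 0" by simp
        thus ?thesis unfolding R(1) using h0 by (simp add: mult.assoc)
      qed
      ultimately show "kk c h x * rho c h x < 0" by (simp add: mult_neg_pos)
    qed
  qed
qed

lemma phi_le_Mx: assumes c4: "4*c \<le> h^2" and t: "t > 0" "sqrt c \<le> t" "t \<le> ts"
  shows "phi c h t \<le> Mx c h"
proof -
  have S: "\<And>t1 t2. sqrt c \<le> t1 \<Longrightarrow> t1 < t2 \<Longrightarrow> t2 \<le> r2g c h \<Longrightarrow> t1 > 0 \<Longrightarrow> phi c h t1 < phi c h t2"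
    "\<And>t1 t2. r2g c h \<le> t1 \<Longrightarrow> t1 < t2 \<Longrightarrow> t2 \<le> ts \<Longrightarrow> phi c h t2 < phi c h t1"
    using B2_shape[OF c4] by blast+
  show ?thesis unfolding Mx_def
  proof (cases "t < r2g c h")
    case True thus "phi c h t \<le> phi c h (r2g c h)" using S(1)[of t "r2g c h"] t by simp
  next
    case False
    thus "phi c h t \<le> phi c h (r2g c h)" using S(2)[of "r2g c h" t] t by (cases "t = r2g c h") auto
  qed
qed

lemma phi_ge_P: assumes "h*t - c > 0" shows "phi c h t \<ge> PP h t"
proof -
  have "(kk c h t)^2 = 4*t*(h-t)*(h*t-c) + (t^2-c)^2" using id4[of c h t] by simp
  hence "phi c h t = 4*t*(h-t) + (t^2-c)^2/(h*t-c)" unfolding phi_def using assms by (simp add: field_simps)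
  moreover have "(t^2-c)^2/(h*t-c) \<ge> 0" using assms by simp
  ultimately show ?thesis unfolding PP_def by simp
qed

lemma Mx_ge_h2: assumes c4: "4*c \<le> h^2" shows "h^2 \<le> Mx c h"
proof -
  have cB: "c < h^2"
  proof -
    have "h^2 > 0" using h0 by simp
    thus ?thesis using c4 c0 by linarith
  qed
  have sch2: "2* sqrt c \<le> h"
  proof -
    have "sqrt (4*c) \<le> sqrt (h^2)" using c4 by (intro real_sqrt_le_mono)
    thus ?thesis using h0 by (simp add: real_sqrt_mult)
  qed
  define m where "m = h/2"
  have hm: "h = 2*m" unfolding m_def by simp
  have m: "m > 0" "sqrt c \<le> m" "m \<le> ts" using h0 sch2 B_ts[OF cB] hm by simp_all
  have "PP h m = h^2" unfolding PP_def hm by (simp add: power2_eq_square)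
  moreover have "PP h m \<le> phi c h m" using phi_ge_P B_pos[OF cB m(1) m(2)] by simp
  moreover have "phi c h m \<le> Mx c h" using phi_le_Mx[OF c4 m] .
  ultimately show ?thesis by simp
qed

lemma Mx_ge_P: assumes c4: "4*c \<le> h^2" and cp: "c > 0" shows "PP h (sqrt c) \<le> Mx c h"
proof -
  have cB: "c < h^2"
  proof -
    have "h^2 > 0" using h0 by simp
    thus ?thesis using c4 c0 by linarith
  qed
  have "phi c h (sqrt c) \<le> Mx c h" using phi_le_Mx[OF c4] cp B_ts[OF cB] by simp
  thus ?thesis using B_phi_P[OF cB cp] by simp
qed

end

context cfg begin

lemma struct_thm:
  shows "(if 4*c \<le> h^2 then b < Mx c h else b < h^2) \<Longrightarrow> \<exists>a1 a2. GapY (Ys c h b) a1 a2"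
    and "\<not> (if 4*c \<le> h^2 then b < Mx c h else b < h^2) \<Longrightarrow> NoGapY (Ys c h b)"
proof -
  assume g: "if 4*c \<le> h^2 then b < Mx c h else b < h^2"
  show "\<exists>a1 a2. GapY (Ys c h b) a1 a2"
  proof (cases "4*c \<le> h^2")
    case True thus ?thesis using caseB2(2)[OF True] g by simp
  next
    case False
    hence b: "b < h^2" using g by simp
    show ?thesis
    proof (cases "c \<ge> h^2")
      case True thus ?thesis using caseA(2)[OF True b] by simp
    next
      case False thus ?thesis using caseB1(2) b \<open>\<not> 4*c \<le> h^2\<close> by simp
    qed
  qed
next
  assume g: "\<not> (if 4*c \<le> h^2 then b < Mx c h else b < h^2)"
  show "NoGapY (Ys c h b)"
  proof (cases "4*c \<le> h^2")
    case True thus ?thesis using caseB2(1)[OF True] g by simp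
  next
    case False
    hence b: "b \<ge> h^2" using g by simp
    show ?thesis
    proof (cases "c \<ge> h^2")
      case True thus ?thesis using caseA(1)[OF True b] by simp
    next
      case False thus ?thesis using caseB1(1) b \<open>\<not> 4*c \<le> h^2\<close> by simp
    qed
  qed
qed

end


lemma disc_fact2:
  fixes a b p r :: real
  shows "disc4 1 (p - a - b) (r - (a+b)*p + a*b) (a*b*p - (a+b)*r) (a*b*r)
     = (a-b)^2 * (p^2 - 4*r) * (a^2+p*a+r)^2 * (b^2+p*b+r)^2"
  unfolding disc4_def apply (simp only: power_one mult_1 mult_1_right) by algebra

lemma disc_fact1:
  fixes e p r :: real
  shows "disc4 1 (p - 2*e) (r - 2*e*p + e*e) (e*e*p - 2*e*r) (e*e*r) = 0"
  unfolding disc4_def apply (simp only: power_one mult_1 mult_1_right) by algebra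

definition fq :: "real \<Rightarrow> real \<Rightarrow> real \<Rightarrow> real \<Rightarrow> real \<Rightarrow> real" where
  "fq B1 C1 D1 E1 m = m^4 + B1*m^3 + C1*m^2 + D1*m + E1"
definition fqd :: "real \<Rightarrow> real \<Rightarrow> real \<Rightarrow> real \<Rightarrow> real" where
  "fqd B1 C1 D1 m = 4*m^3 + 3*B1*m^2 + 2*C1*m + D1"

lemma disc_double:
  assumes f1: "fq B1 C1 D1 E1 a1 = 0" and f2: "fq B1 C1 D1 E1 a2 = 0" and ne: "a1 \<noteq> a2"
    and dz: "disc4 1 B1 C1 D1 E1 = 0"
  shows "\<exists>m. fq B1 C1 D1 E1 m = 0 \<and> fqd B1 C1 D1 m = 0"
proof -
  define p where "p = B1 + a1 + a2"
  define r where "r = C1 + (a1+a2)*p - a1*a2"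
  define L where "L = D1 - (a1*a2*p - (a1+a2)*r)"
  define M where "M = E1 - a1*a2*r"
  have idf: "\<And>m. fq B1 C1 D1 E1 m = (m-a1)*(m-a2)*(m^2 + p*m + r) + L*m + M"
    unfolding fq_def p_def r_def L_def M_def by algebra
  have idd: "\<And>m. fqd B1 C1 D1 m = (2*m - a1 - a2)*(m^2 + p*m + r) + (m-a1)*(m-a2)*(2*m + p) + L"
    unfolding fqd_def p_def r_def L_def by algebra
  have "L*a1 + M = 0" "L*a2 + M = 0" using idf[of a1] idf[of a2] f1 f2 by simp_all
  moreover have "L*(a1 - a2) = (L*a1 + M) - (L*a2 + M)" by algebra
  ultimately have "L*(a1 - a2) = 0" by simp
  hence L0: "L = 0" using ne by simp
  hence M0: "M = 0" using \<open>L*a1 + M = 0\<close> by simp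
  have co: "B1 = p - a1 - a2" "C1 = r - (a1+a2)*p + a1*a2" "D1 = a1*a2*p - (a1+a2)*r" "E1 = a1*a2*r"
    using L0 M0 unfolding p_def r_def L_def M_def by simp_all
  have "disc4 1 B1 C1 D1 E1 = (a1-a2)^2 * (p^2 - 4*r) * (a1^2+p*a1+r)^2 * (a2^2+p*a2+r)^2"
    unfolding co using disc_fact2 by simp
  hence "(p^2 - 4*r) = 0 \<or> (a1^2+p*a1+r) = 0 \<or> (a2^2+p*a2+r) = 0" using dz ne by simp
  thus ?thesis
  proof (elim disjE)
    assume z: "p^2 - 4*r = 0"
    define m where "m = -p/2"
    have "m^2 + p*m + r = 0" unfolding m_def using z by (simp add: field_simps power2_eq_square)
    moreover have "2*m + p = 0" unfolding m_def by simp
    ultimately have "fq B1 C1 D1 E1 m = 0" "fqd B1 C1 D1 m = 0" using idf[of m] idd[of m] L0 M0 by simp_all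
    thus ?thesis by blast
  next
    assume z: "a1^2+p*a1+r = 0"
    have "fqd B1 C1 D1 a1 = 0" using idd[of a1] L0 z by simp
    thus ?thesis using f1 by blast
  next
    assume z: "a2^2+p*a2+r = 0"
    have "fqd B1 C1 D1 a2 = 0" using idd[of a2] L0 z by simp
    thus ?thesis using f2 by blast
  qed
qed

lemma double_disc:
  assumes f: "fq B1 C1 D1 E1 e = 0" and fd: "fqd B1 C1 D1 e = 0"
  shows "disc4 1 B1 C1 D1 E1 = 0"
proof -
  define p where "p = B1 + 2*e"
  define r where "r = C1 + 2*e*p - e*e"
  define L where "L = D1 - (e*e*p - 2*e*r)"
  define M where "M = E1 - e*e*r"
  have idf: "\<And>m. fq B1 C1 D1 E1 m = (m-e)*(m-e)*(m^2 + p*m + r) + L*m + M"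
    unfolding fq_def p_def r_def L_def M_def by algebra
  have idd: "\<And>m. fqd B1 C1 D1 m = (2*m - 2*e)*(m^2 + p*m + r) + (m-e)*(m-e)*(2*m + p) + L"
    unfolding fqd_def p_def r_def L_def by algebra
  have L0: "L = 0" using idd[of e] fd by simp
  have M0: "M = 0" using idf[of e] f L0 by simp
  have co: "B1 = p - 2*e" "C1 = r - 2*e*p + e*e" "D1 = e*e*p - 2*e*r" "E1 = e*e*r"
    using L0 M0 unfolding p_def r_def L_def M_def by simp_all
  show ?thesis unfolding co using disc_fact1 by simp
qed

lemma disc_q_fq: "disc_q c be (2*h) = disc4 1 (4*h) (2*c + 4*h^2) (2*h*(be/2 + 2*c)) (c*(be + c))"
  unfolding disc_q_def by (simp add: power2_eq_square)

lemma qq_fq: "qq c h be t = fq (4*h) (2*c + 4*h^2) (2*h*(be/2 + 2*c)) (c*(be + c)) (-t)"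
  unfolding qq_def kk_def fq_def by (simp add: power2_eq_square power3_eq_cube algebra_simps power4_eq_xxxx)

lemma qqd_fqd: "2*kk c h t*(2*t - 2*h) - be*h = - fqd (4*h) (2*c + 4*h^2) (2*h*(be/2 + 2*c)) (-t)"
  unfolding kk_def fqd_def by (simp add: power2_eq_square power3_eq_cube algebra_simps)

lemma rho_kk: "rho c h t = 2*(2*t - 2*h)*(h*t - c) - h*kk c h t"
  unfolding rho_def kk_def by algebra

context cfg begin

lemma qq_isCont: "isCont (qq c h b) x" unfolding qq_def kk_def by (intro continuous_intros)

lemma qq_d_eq: "2*kk c h t*(2*t - 2*h) - b*h = 0 \<Longrightarrow> qq c h b t = 0 \<Longrightarrow>
   h*t - c > 0 \<and> rho c h t = 0 \<and> phi c h t = b"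
proof -
  assume d: "2*kk c h t*(2*t - 2*h) - b*h = 0" and q: "qq c h b t = 0"
  have e1: "(kk c h t)^2 = b*(h*t - c)" using q unfolding qq_def by simp
  have kn: "kk c h t \<noteq> 0"
  proof
    assume "kk c h t = 0"
    hence "b*h = 0" using d by simp
    thus False using b0 h0 by simp
  qed
  have "(kk c h t)^2 > 0" using kn by simp
  hence p: "h*t - c > 0" using e1 b0 by (simp add: zero_less_mult_iff)
  have "kk c h t * rho c h t = h*(b*(h*t-c) - (kk c h t)^2)"
  proof -
    have "kk c h t * rho c h t = (2*kk c h t*(2*t - 2*h))*(h*t - c) - h*(kk c h t)^2"
      unfolding rho_kk by (simp add: algebra_simps power2_eq_square)
    also have "2*kk c h t*(2*t - 2*h) = b*h" using d by simp
    finally show ?thesis by (simp add: algebra_simps)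
  qed
  hence "kk c h t * rho c h t = 0" using e1 by simp
  hence r: "rho c h t = 0" using kn by simp
  have "phi c h t = b" unfolding phi_def using e1 p by simp
  thus ?thesis using p r by simp
qed

lemma disc_of: assumes c4: "4*c \<le> h^2" and M: "Mx c h = b" shows "disc_q c b (2*h) = 0"
proof -
  have cB: "c < h^2"
  proof -
    have "h^2 > 0" using h0 by simp
    thus ?thesis using c4 c0 by linarith
  qed
  define e where "e = r2g c h"
  have R: "\<And>x. rho c h x = 3*h*(x - r1g c h)*(x - e)" "sqrt c \<le> e" "e > 0"
    using B2_roots[OF h0 c0 c4] unfolding e_def by auto
  have p: "h*e - c > 0" using B_pos[OF cB R(3) R(2)] by simp
  have ph: "phi c h e = b" using M unfolding Mx_def e_def by simp
  have k2: "(kk c h e)^2 = b*(h*e - c)" using ph p unfolding phi_def by (simp add: field_simps)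
  hence q: "qq c h b e = 0" unfolding qq_def by simp
  have r: "rho c h e = 0" using R(1)[of e] by simp
  have "2*(2*e - 2*h)*(h*e - c) = h*kk c h e" using r unfolding rho_kk by simp
  hence "kk c h e * (2*(2*e - 2*h)*(h*e - c)) = kk c h e * (h*kk c h e)" by simp
  hence "2*kk c h e*(2*e - 2*h)*(h*e - c) = h*(kk c h e)^2" by (simp add: algebra_simps power2_eq_square)
  also have "\<dots> = b*h*(h*e - c)" using k2 by simp
  finally have "(2*kk c h e*(2*e - 2*h) - b*h)*(h*e - c) = 0" by (simp add: algebra_simps)
  hence d: "2*kk c h e*(2*e - 2*h) - b*h = 0" using p by simp
  have "fq (4*h) (2*c + 4*h^2) (2*h*(b/2 + 2*c)) (c*(b + c)) (-e) = 0" using q qq_fq by metis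
  moreover have "fqd (4*h) (2*c + 4*h^2) (2*h*(b/2 + 2*c)) (-e) = 0" using d qqd_fqd by (metis neg_equal_0_iff_equal)
  ultimately show ?thesis unfolding disc_q_fq using double_disc by blast
qed

lemma disc_imp: assumes cp: "c > 0" and cB: "c < h^2" and hb: "h^2 \<le> b" and dz: "disc_q c b (2*h) = 0"
  shows "4*c \<le> h^2 \<and> Mx c h = b"
proof -
  have tsp: "ts > h" "ts > sqrt c" "ts > 0" "phi c h ts = 0" using B_ts[OF cB] by auto
  have qts: "qq c h b ts < 0"
  proof -
    have "h*ts - c > 0" using B_pos[OF cB tsp(3)] tsp by simp
    thus ?thesis unfolding qq_def using B_kk_ts[OF cB] b0 by simp
  qed
  have "h*h < h*ts" using tsp h0 by (intro mult_strict_left_mono) auto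
  hence "c < h*ts" using cB by (simp add: power2_eq_square)
  hence ch: "c/h < ts" using h0 by (simp add: pos_divide_less_eq mult.commute)
  have qch: "qq c h b (c/h) \<ge> 0" unfolding qq_def using h0 by simp
  obtain a where a: "c/h \<le> a" "a \<le> ts" "qq c h b a = 0"
    using IVT2[of "qq c h b" ts 0 "c/h"] qts qch ch qq_isCont by fastforce
  have T0ts: "ts < T0" using bound B_ts[OF cB] by blast
  have qT: "qq c h b T0 \<ge> 0"
  proof (rule ccontr)
    assume "\<not> qq c h b T0 \<ge> 0"
    hence "inY c h b T0" using Y1 T0ts tsp by simp
    thus False using bound by blast
  qed
  obtain b' where b': "ts \<le> b'" "b' \<le> T0" "qq c h b b' = 0"
    using IVT[of "qq c h b" ts 0 T0] qts qT T0ts qq_isCont by fastforce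
  have ne: "-a \<noteq> -b'"
  proof
    assume "-a = -b'" hence "a = ts" using a b' by simp
    thus False using a qts by simp
  qed
  define B1 where "B1 = 4*h"
  define C1 where "C1 = 2*c + 4*h^2"
  define D1 where "D1 = 2*h*(b/2 + 2*c)"
  define E1 where "E1 = c*(b + c)"
  have f1: "fq B1 C1 D1 E1 (-a) = 0" using a qq_fq unfolding B1_def C1_def D1_def E1_def by metis
  have f2: "fq B1 C1 D1 E1 (-b') = 0" using b' qq_fq unfolding B1_def C1_def D1_def E1_def by metis
  have "disc4 1 B1 C1 D1 E1 = 0" using dz disc_q_fq unfolding B1_def C1_def D1_def E1_def by metis
  then obtain m where m: "fq B1 C1 D1 E1 m = 0" "fqd B1 C1 D1 m = 0" using disc_double[OF f1 f2 ne] by blast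
  define e where "e = -m"
  have qe: "qq c h b e = 0" using m(1) qq_fq[of c h b e] unfolding e_def B1_def C1_def D1_def E1_def by simp
  have de: "2*kk c h e*(2*e - 2*h) - b*h = 0" using m(2) qqd_fqd[of c h e b] unfolding e_def B1_def C1_def D1_def by simp
  have E: "h*e - c > 0" "rho c h e = 0" "phi c h e = b" using qq_d_eq[OF de qe] by auto
  have c4: "4*c \<le> h^2"
  proof (rule ccontr)
    assume "\<not> 4*c \<le> h^2"
    hence "(h^2-c)*(h^2-4*c) < 0" using cB by (simp add: mult_pos_neg)
    hence y: "4*((h^2-c)*(h^2-4*c)) < 0" by simp
    have "(6*h*e - 4*c - 2*h^2)^2 \<ge> 0" by simp
    hence "12*h*rho c h e > 0" unfolding rho_sq using y by (simp only: mult.assoc)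
    thus False using E by simp
  qed
  have R: "\<And>x. rho c h x = 3*h*(x - r1g c h)*(x - r2g c h)" "r1g c h \<le> sqrt c" "sqrt c \<le> r2g c h"
    "r2g c h > 0" "r1g c h \<le> r2g c h"
    using B2_roots[OF h0 c0 c4] by auto
  have "e = r1g c h \<or> e = r2g c h" using R(1)[of e] E h0 by simp
  moreover have "e \<noteq> r2g c h \<Longrightarrow> False"
  proof -
    assume en: "e \<noteq> r2g c h"
    hence er: "e = r1g c h" using calculation by simp
    hence lt: "e < r2g c h" using en R by simp
    have prod: "r1g c h * r2g c h = c"
    proof -
      have "rho c h 0 = 3*h*c" unfolding rho_def by simp
      moreover have "rho c h 0 = 3*h*(r1g c h * r2g c h)" using R(1)[of 0] by (simp add: algebra_simps)
      ultimately have "3*h*(r1g c h * r2g c h) = 3*h*c" by simp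
      thus ?thesis using h0 by simp
    qed
    have esc: "e < sqrt c"
    proof (rule ccontr)
      assume "\<not> e < sqrt c"
      hence "e \<ge> sqrt c" by simp
      hence "e * r2g c h > sqrt c * sqrt c" using lt cp by (intro mult_le_less_imp_less) auto
      thus False using prod er cp by simp
    qed
    have "phi c h e < phi c h (sqrt c)"
    proof (rule phi_inc[OF esc E(1) h0])
      fix x assume x: "e < x" "x < sqrt c"
      have "rho c h x < 0"
      proof -
        have "x - r1g c h > 0" "x - r2g c h < 0" using x er R by simp_all
        hence "(x - r1g c h)*(x - r2g c h) < 0" by (simp add: mult_pos_neg)
        thus ?thesis unfolding R(1) using h0 by (simp add: mult.assoc mult_pos_neg)
      qed
      moreover have "kk c h x < 0"
      proof -
        have s: "sE > 0" "sE^2 = h^2 - c" using B_sE[OF cB] by auto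
        have r2ts: "r2g c h < ts" using B2_shape(3)[OF c4] .
        have "(h - sE)*ts = c" unfolding ts_def using s by (simp add: algebra_simps power2_eq_square)
        have "h*e > 0" using E(1) cp by simp
        hence ep: "e > 0" using h0 by (simp add: zero_less_mult_iff)
        have "e * ts > e * r2g c h" using r2ts ep by (intro mult_strict_left_mono) auto
        hence "e * ts > c" using prod er by simp
        hence "e * ts > (h - sE)*ts" using \<open>(h - sE)*ts = c\<close> by simp
        hence "e > h - sE" using tsp by simp
        hence lo: "x - h > - sE" using x by simp
        have hi: "x - h < sE" using x sqc_lt_h[OF cB] s by simp
        have "\<bar>x - h\<bar> < sE" using lo hi by (simp add: abs_less_iff)
        hence "\<bar>x - h\<bar>^2 < sE^2" by (intro power_strict_mono) auto
        thus ?thesis unfolding kk_sE using s by simp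
      qed
      ultimately show "kk c h x * rho c h x > 0" by (simp add: mult_neg_neg)
    qed
    also have "phi c h (sqrt c) = PP h (sqrt c)" using B_phi_P[OF cB cp] .
    also have "PP h (sqrt c) \<le> h^2" using P_le[of h "sqrt c"] by (smt (verit) zero_le_power2)
    finally have "phi c h e < b" using hb by simp
    thus False using E by simp
  qed
  ultimately have "e = r2g c h" by blast
  thus ?thesis using c4 E unfolding Mx_def by simp
qed

end

lemma phi_h_mono: assumes cp: "c > 0" and t: "t > 0" "sqrt c \<le> t" "t \<le> h1" and h: "sqrt c < h1" "h1 < h2"
  shows "phi c h1 t < phi c h2 t"
proof -
  define K where "K = - kk c h1 t"
  define dl where "dl = h2 - h1"
  define A1 where "A1 = h1*t - c"
  define A2 where "A2 = h2*t - c"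
  have sc: "sqrt c > 0" using cp by simp
  have cc: "sqrt c * sqrt c = c" using cp by simp
  have h1nn: "h1 \<ge> 0" using h sc by linarith
  have "h1*t \<ge> h1* sqrt c" using h1nn t by (intro mult_left_mono) auto
  moreover have "h1* sqrt c > sqrt c * sqrt c" using h sc by (intro mult_strict_right_mono) auto
  ultimately have "h1*t > sqrt c * sqrt c" by linarith
  hence A1p: "A1 > 0" unfolding A1_def using cc by simp
  have dlp: "dl > 0" unfolding dl_def using h by simp
  have A2e: "A2 = A1 + t*dl" unfolding A2_def A1_def dl_def by algebra
  have "t*dl > 0" using t dlp by simp
  hence A2p: "A2 > 0" using A2e A1p by linarith
  have "t*t \<le> t*h1" using t by (intro mult_left_mono) auto
  moreover have "c < t*h1"
  proof -
    have "sqrt c * sqrt c \<le> t * sqrt c" using t sc by (intro mult_right_mono) auto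
    moreover have "t * sqrt c < t * h1" using t h by (intro mult_strict_left_mono) auto
    ultimately show ?thesis using cc by simp
  qed
  ultimately have Kp: "K > 0" unfolding K_def kk_def by (simp add: power2_eq_square algebra_simps)
  have k2: "kk c h2 t = -(K + 2*t*dl)" unfolding K_def dl_def kk_def by algebra
  have key: "(kk c h2 t)^2*A1 - (kk c h1 t)^2*A2 = t*dl*(K*(4*A1 - K) + 4*t*dl*A1)"
    unfolding k2 A2e unfolding K_def by algebra
  have "4*A1 - K = 2*h1*t + t^2 - 3*c" unfolding A1_def K_def kk_def by algebra
  moreover have "t^2 \<ge> c"
  proof -
    have "t^2 \<ge> (sqrt c)^2" using t sc by (intro power_mono) auto
    thus ?thesis using cp by simp
  qed
  moreover have "2*h1*t > 2*c" using \<open>h1*t > sqrt c * sqrt c\<close> cc by simp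
  ultimately have "4*A1 - K > 0" by simp
  hence "K*(4*A1 - K) + 4*t*dl*A1 > 0" using Kp t dlp A1p by (simp add: add_pos_pos)
  hence "(kk c h2 t)^2*A1 - (kk c h1 t)^2*A2 > 0" unfolding key using t dlp by simp
  hence "(kk c h1 t)^2*A2 < (kk c h2 t)^2*A1" by simp
  thus ?thesis unfolding phi_def A1_def[symmetric] A2_def[symmetric] using A1p A2p
    by (simp add: divide_less_eq less_divide_eq mult.commute)
qed

lemma Mx_mono: assumes cp: "c > 0" and h: "2* sqrt c \<le> h1" "h1 < h2" shows "Mx c h1 < Mx c h2"
proof -
  have sc: "sqrt c > 0" using cp by simp
  have h1p: "h1 > 0" using h sc by linarith
  have h2p: "h2 > 0" using h h1p by simp
  interpret A1: cfg c h1 1 using cp h1p by unfold_locales auto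
  interpret A2: cfg c h2 1 using cp h2p by unfold_locales auto
  have c41: "4*c \<le> h1^2"
  proof -
    have "(2* sqrt c)^2 \<le> h1^2" using h sc by (intro power_mono) auto
    thus ?thesis using cp by (simp add: power_mult_distrib)
  qed
  have c42: "4*c \<le> h2^2"
  proof -
    have "h1^2 \<le> h2^2" using h h1p by (intro power_mono) auto
    thus ?thesis using c41 by simp
  qed
  define t where "t = r2g c h1"
  have R: "sqrt c \<le> t" "t \<le> h1" "t > 0" using B2_roots[OF h1p _ c41] cp unfolding t_def by auto
  have "phi c h1 t < phi c h2 t" using phi_h_mono[OF cp R(3) R(1) R(2)] h sc by simp
  also have "phi c h2 t \<le> Mx c h2"
  proof (rule A2.phi_le_Mx[OF c42 R(3) R(1)])
    have cB: "c < h2^2" using c42 cp by simp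
    show "t \<le> A2.ts" using A2.B_ts[OF cB] R h by simp
  qed
  finally show ?thesis unfolding Mx_def t_def by simp
qed

lemma Mx_base: assumes cp: "c > 0" shows "Mx c (2* sqrt c) = 4*c"
proof -
  have sc: "sqrt c > 0" using cp by simp
  have cc: "sqrt c * sqrt c = c" using cp by simp
  interpret A: cfg c "2* sqrt c" 1 using cp by unfold_locales auto
  have "RR c (2* sqrt c) = 0" unfolding RR_def using cp by (simp add: power_mult_distrib)
  hence "r2g c (2* sqrt c) = (12*c)/(12* sqrt c)" unfolding r2g_def using cp by (simp add: power_mult_distrib)
  also have "\<dots> = sqrt c" using sc cc by (simp add: field_simps)
  finally have r: "r2g c (2* sqrt c) = sqrt c" .
  have cB: "c < (2* sqrt c)^2" using cp by (simp add: power_mult_distrib)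
  have "Mx c (2* sqrt c) = PP (2* sqrt c) (sqrt c)" unfolding Mx_def r using A.B_phi_P[OF cB cp] .
  also have "\<dots> = 4*c" unfolding PP_def using cc by (simp add: algebra_simps)
  finally show ?thesis .
qed

lemma Mx_cont: assumes cp: "c > 0" shows "continuous_on {2* sqrt c..} (Mx c)"
proof -
  have pos: "\<And>h. h \<in> {2* sqrt c..} \<Longrightarrow> h > 0 \<and> h * r2g c h - c > 0"
  proof -
    fix h assume "h \<in> {2* sqrt c..}"
    hence hh: "h \<ge> 2* sqrt c" by simp
    have sc: "sqrt c > 0" using cp by simp
    hence hp: "h > 0" using hh by linarith
    interpret A: cfg c h 1 using cp hp by unfold_locales auto
    have c4: "4*c \<le> h^2"
    proof -
      have "(2* sqrt c)^2 \<le> h^2" using hh sc by (intro power_mono) auto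
      thus ?thesis using cp by (simp add: power_mult_distrib)
    qed
    have cB: "c < h^2" using c4 cp by simp
    have R: "sqrt c \<le> r2g c h" "r2g c h > 0" using B2_roots[OF hp _ c4] cp by auto
    show "h > 0 \<and> h * r2g c h - c > 0" using A.B_pos[OF cB R(2) R(1)] hp by simp
  qed
  have e: "Mx c = (\<lambda>h. ((r2g c h)^2 - 2*h*r2g c h + c)^2 / (h * r2g c h - c))"
    unfolding Mx_def phi_def kk_def by auto
  have cr: "continuous_on {2* sqrt c..} (r2g c)"
    unfolding r2g_def RR_def using pos cp by (auto intro!: continuous_intros)
  have nz: "\<forall>x\<in>{2* sqrt c..}. x * r2g c x - c \<noteq> 0" using pos by force
  show ?thesis unfolding e using nz cr by (intro continuous_intros) auto
qed

lemma Mx_c0: assumes h0: "h > 0" shows "Mx 0 h = 32*h^2/27"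
proof -
  have "RR 0 h = h^2" unfolding RR_def by (simp add: power2_eq_square real_sqrt_mult_self)
  hence r: "r2g 0 h = 2*h/3" unfolding r2g_def using h0 by (simp add: field_simps power2_eq_square)
  have k: "kk 0 h (2*h/3) = -8*h^2/9" unfolding kk_def by (simp add: field_simps power2_eq_square)
  show ?thesis unfolding Mx_def phi_def r k using h0 by (simp add: field_simps power2_eq_square)
qed

lemma sqrt_lt_pos: assumes "d > 0" "x \<ge> 0" shows "sqrt x < d \<longleftrightarrow> x < d^2"
proof -
  have "sqrt x < d \<longleftrightarrow> sqrt x < sqrt (d^2)" using assms by simp
  also have "\<dots> \<longleftrightarrow> x < d^2" by (rule real_sqrt_less_iff)
  finally show ?thesis .
qed

lemma thr: assumes c0: "c \<ge> 0" and d0: "d > 0" and b0: "be > 0"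
  shows "(if 4*c \<le> (d/2)^2 then be < Mx c (d/2) else be < (d/2)^2)
     \<longleftrightarrow> ereal d > min (ereal (2 * sqrt be)) (d2 c be)"
proof -
  define h where "h = d/2"
  have hp: "h > 0" unfolding h_def using d0 by simp
  have dh: "d = 2*h" unfolding h_def by simp
  have sbe: "2 * sqrt be = sqrt (4*be)" by (simp add: real_sqrt_mult)
  have Rd: "ereal d > ereal (2 * sqrt be) \<longleftrightarrow> be < h^2"
  proof -
    have "ereal d > ereal (2 * sqrt be) \<longleftrightarrow> sqrt (4*be) < d" using sbe by simp
    also have "\<dots> \<longleftrightarrow> 4*be < d^2" using sqrt_lt_pos d0 b0 by simp
    also have "\<dots> \<longleftrightarrow> be < h^2" unfolding dh by (simp add: power_mult_distrib)
    finally show ?thesis .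
  qed
  have main: "(if 4*c \<le> h^2 then be < Mx c h else be < h^2) \<longleftrightarrow> ereal d > min (ereal (2 * sqrt be)) (d2 c be)"
  proof (cases "c = 0")
    case True
    have m: "Mx c h = 32*h^2/27" using True Mx_c0[OF hp] by simp
    have L: "(if 4*c \<le> h^2 then be < Mx c h else be < h^2) \<longleftrightarrow> be < 32*h^2/27"
      using True unfolding m by simp
    have d2e: "d2 c be = ereal (sqrt (27*be/8))" unfolding d2_def using True by simp
    have "sqrt (27*be/8) \<le> sqrt (4*be)" using b0 by (intro real_sqrt_le_mono) simp
    hence mn: "min (ereal (2 * sqrt be)) (d2 c be) = ereal (sqrt (27*be/8))" unfolding d2e sbe by simp
    have "ereal d > ereal (sqrt (27*be/8)) \<longleftrightarrow> sqrt (27*be/8) < d" by simp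
    also have "\<dots> \<longleftrightarrow> 27*be/8 < d^2" using sqrt_lt_pos d0 b0 by simp
    also have "\<dots> \<longleftrightarrow> be < 32*h^2/27" unfolding dh by (simp add: power_mult_distrib field_simps)
    finally show ?thesis using L mn by simp
  next
    case False
    hence cp: "c > 0" using c0 by simp
    show ?thesis
    proof (cases "be < 4*c")
      case True
      have d2e: "d2 c be = \<infinity>" unfolding d2_def using True False by simp
      have mn: "min (ereal (2 * sqrt be)) (d2 c be) = ereal (2 * sqrt be)" unfolding d2e by simp
      have "(if 4*c \<le> h^2 then be < Mx c h else be < h^2) \<longleftrightarrow> be < h^2"
      proof (cases "4*c \<le> h^2")
        case True
        interpret A: cfg c h 1 using cp hp by unfold_locales auto
        have "h^2 \<le> Mx c h" using A.Mx_ge_h2[OF True] .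
        thus ?thesis using True \<open>be < 4*c\<close> by simp
      qed simp
      thus ?thesis using mn Rd by simp
    next
      case bc: False
      hence bc: "be \<ge> 4*c" by simp
      have sc: "sqrt c > 0" using cp by simp
      have sb: "2* sqrt c \<le> sqrt be"
      proof -
        have "sqrt (4*c) \<le> sqrt be" using bc by (intro real_sqrt_le_mono)
        thus ?thesis by (simp add: real_sqrt_mult)
      qed
      obtain hs where hs: "2* sqrt c \<le> hs" "hs \<le> sqrt be" "Mx c hs = be"
      proof -
        have c1: "Mx c (2* sqrt c) \<le> be" using Mx_base[OF cp] bc by simp
        have c2: "be \<le> Mx c (sqrt be)"
        proof -
          have sbp: "sqrt be > 0" using b0 by simp
          interpret A: cfg c "sqrt be" 1 using cp sbp by unfold_locales auto
          have "4*c \<le> (sqrt be)^2" using bc b0 by simp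
          hence "(sqrt be)^2 \<le> Mx c (sqrt be)" using A.Mx_ge_h2 by blast
          thus ?thesis using b0 by simp
        qed
        have "continuous_on {2* sqrt c .. sqrt be} (Mx c)"
          using Mx_cont[OF cp] by (rule continuous_on_subset) auto
        then obtain x where "2* sqrt c \<le> x" "x \<le> sqrt be" "Mx c x = be"
          using IVT'[of "Mx c" "2* sqrt c" be "sqrt be"] c1 c2 sb by blast
        thus ?thesis using that by blast
      qed
      have mono_iff: "\<And>h1. 2* sqrt c \<le> h1 \<Longrightarrow> be < Mx c h1 \<longleftrightarrow> hs < h1"
      proof -
        fix h1 assume h1: "2* sqrt c \<le> h1"
        show "be < Mx c h1 \<longleftrightarrow> hs < h1"
        proof
          assume "be < Mx c h1"
          show "hs < h1"
          proof (rule ccontr)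
            assume "\<not> hs < h1"
            hence "h1 \<le> hs" by simp
            hence "Mx c h1 \<le> Mx c hs"
            proof (cases "h1 = hs")
              case False
              hence "h1 < hs" using \<open>h1 \<le> hs\<close> by simp
              thus ?thesis using Mx_mono[OF cp h1, of hs] by simp
            qed simp
            thus False using \<open>be < Mx c h1\<close> hs by simp
          qed
        next
          assume "hs < h1" thus "be < Mx c h1" using Mx_mono[OF cp hs(1)] hs by simp
        qed
      qed
      define P where "P = (\<lambda>x. 2 * sqrt c < x \<and> x \<le> 2 * sqrt be \<and> disc_q c be x = 0)"
      have P2: "P (2*hs)"
      proof -
        have hsp: "hs > 0" using hs sc by linarith
        interpret A: cfg c hs be using cp hsp b0 by unfold_locales auto
        have c4: "4*c \<le> hs^2"
        proof -
          have "(2* sqrt c)^2 \<le> hs^2" using hs sc by (intro power_mono) auto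
          thus ?thesis using cp by (simp add: power_mult_distrib)
        qed
        have "disc_q c be (2*hs) = 0" using A.disc_of[OF c4 hs(3)] .
        moreover have "2* sqrt c < 2*hs" using hs sc by linarith
        ultimately show ?thesis unfolding P_def using hs by simp
      qed
      have Pu: "\<And>x. P x \<Longrightarrow> x = 2*hs"
      proof -
        fix x assume Px: "P x"
        define h1 where "h1 = x/2"
        have xh: "x = 2*h1" unfolding h1_def by simp
        have a: "sqrt c < h1" "h1 \<le> sqrt be" "disc_q c be (2*h1) = 0" using Px unfolding P_def xh by auto
        have h1p: "h1 > 0" using a sc by linarith
        interpret A: cfg c h1 be using cp h1p b0 by unfold_locales auto
        have cB: "c < h1^2"
        proof -
          have "(sqrt c)^2 < h1^2" using a sc by (intro power_strict_mono) auto
          thus ?thesis using cp by simp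
        qed
        have hb: "h1^2 \<le> be"
        proof -
          have "h1^2 \<le> (sqrt be)^2" using a h1p by (intro power_mono) auto
          thus ?thesis using b0 by simp
        qed
        have r: "4*c \<le> h1^2 \<and> Mx c h1 = be" using A.disc_imp[OF cp cB hb a(3)] .
        have "2* sqrt c \<le> h1"
        proof -
          have "sqrt (4*c) \<le> sqrt (h1^2)" using r by (intro real_sqrt_le_mono) simp
          thus ?thesis using h1p by (simp add: real_sqrt_mult)
        qed
        hence "be < Mx c h1 \<longleftrightarrow> hs < h1" using mono_iff by blast
        hence "\<not> hs < h1" using r by simp
        moreover have "\<not> h1 < hs"
        proof
          assume "h1 < hs"
          hence "Mx c h1 < Mx c hs" using Mx_mono[OF cp \<open>2* sqrt c \<le> h1\<close>] by simp
          thus False using r hs by simp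
        qed
        ultimately show "x = 2*hs" unfolding xh by simp
      qed
      have the: "(THE x. 2 * sqrt c < x \<and> x \<le> 2 * sqrt be \<and> disc_q c be x = 0) = 2*hs"
        using the_equality[of P "2*hs"] P2 Pu unfolding P_def by blast
      have d2e: "d2 c be = ereal (2*hs)" unfolding d2_def using False bc the by simp
      have mn: "min (ereal (2 * sqrt be)) (d2 c be) = ereal (2*hs)" unfolding d2e using hs by simp
      have R: "ereal d > ereal (2*hs) \<longleftrightarrow> hs < h" unfolding dh by simp
      have "(if 4*c \<le> h^2 then be < Mx c h else be < h^2) \<longleftrightarrow> hs < h"
      proof (cases "4*c \<le> h^2")
        case True
        have "2* sqrt c \<le> h"
        proof -
          have "sqrt (4*c) \<le> sqrt (h^2)" using True by (intro real_sqrt_le_mono)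
          thus ?thesis using hp by (simp add: real_sqrt_mult)
        qed
        thus ?thesis using True mono_iff by simp
      next
        case False
        have "h < 2* sqrt c"
        proof -
          have "sqrt (h^2) < sqrt (4*c)" using False by (intro real_sqrt_less_mono) simp
          thus ?thesis using hp by (simp add: real_sqrt_mult)
        qed
        hence "\<not> hs < h" using hs by simp
        moreover have "\<not> be < h^2" using False bc by simp
        ultimately show ?thesis using False by simp
      qed
      thus ?thesis using mn R by simp
    qed
  qed
  thus ?thesis unfolding h_def .
qed

theorem proposition3p16:
  fixes c d \<beta> :: real
  assumes "c \<ge> 0" and "d > 0" and "\<beta> > 0"
  shows "((\<exists>!s. maximal_strip (Gamma_beta c d \<beta>) (fst s) (snd s))
            \<longleftrightarrow> ereal d > min (ereal (2 * sqrt \<beta>)) (d2 c \<beta>))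
       \<and> (ereal d \<le> min (ereal (2 * sqrt \<beta>)) (d2 c \<beta>)
            \<longrightarrow> \<not> (\<exists>s0 s1. maximal_strip (Gamma_beta c d \<beta>) s0 s1))"
proof -
  interpret cfg c "d/2" \<beta> using assms by unfold_locales auto
  define gc where "gc = (if 4*c \<le> (d/2)^2 then \<beta> < Mx c (d/2) else \<beta> < (d/2)^2)"
  have T: "gc \<longleftrightarrow> ereal d > min (ereal (2 * sqrt \<beta>)) (d2 c \<beta>)" unfolding gc_def using thr assms by blast
  have f1: "\<forall>w\<in>Gamma_beta c d \<beta>. - Im w \<in> closure (Ys c (d/2) \<beta>)" using F1 assms by blast
  have f2: "\<forall>t\<in>closure (Ys c (d/2) \<beta>). t > 0 \<longrightarrow> (\<exists>w\<in>Gamma_beta c d \<beta>. Im w = -t)" using F2 assms by blast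
  have f3: "\<forall>t\<in>Ys c (d/2) \<beta>. t > 0" using Ys_pos by blast
  show ?thesis
  proof (cases gc)
    case True
    then obtain a1 a2 where "GapY (Ys c (d/2) \<beta>) a1 a2" using struct_thm(1) unfolding gc_def by blast
    hence ex: "\<exists>!s. maximal_strip (Gamma_beta c d \<beta>) (fst s) (snd s)" using gap_strip[OF f1 f2 f3] by blast
    have lt: "ereal d > min (ereal (2 * sqrt \<beta>)) (d2 c \<beta>)" using T True by simp
    hence "\<not> (ereal d \<le> min (ereal (2 * sqrt \<beta>)) (d2 c \<beta>))" by (simp only: not_le)
    thus ?thesis using ex lt by blast
  next
    case False
    hence "NoGapY (Ys c (d/2) \<beta>)" using struct_thm(2) unfolding gc_def by blast
    hence n: "\<not> (\<exists>s0 s1. maximal_strip (Gamma_beta c d \<beta>) s0 s1)" using nogap_strip[OF f1 f2 f3] by blast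
    hence "\<not> (\<exists>!s. maximal_strip (Gamma_beta c d \<beta>) (fst s) (snd s))" by blast
    moreover have "\<not> ereal d > min (ereal (2 * sqrt \<beta>)) (d2 c \<beta>)" using T False by simp
    ultimately show ?thesis using n by blast
  qed
qed

end
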